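(* Let $\mu$ be an invariant probability measure of the unperturbed transition probability function $P$. Then there exists a transition probability function $\Pi$ on $\mathcal{Z}\times\mathfrak{B}(\mathcal{Z})$ such that: (a) for $\mu$-a.e. $z\in\mathcal{Z}$, $\Pi(z,\cdot)$ is an invariant probability measure for $P$; (b) for all $f\in\mathcal{C}_b(\mathcal{Z})$, $\lim_{t\to\infty}\|P^tf-\Pi f\|_\infty=0$; (c) $\mu$ is an invariant probability measure for $\Pi$; (d) for all $z\in\mathcal{Z}$, the support of $\Pi(z,\cdot)$ is contained in the set $\mathcal{S}$ of pure strategy states.
   Context: Finite game: players $\mathcal{I}=\{1,\dots,n\}$, finite action sets $\mathcal{A}_i$, $\mathcal{A}=\prod_i\mathcal{A}_i$, utilities $u_i:\mathcal{A}\to\mathbb{R}$ with $u_i(\alpha)>0$ for all $i,\alpha$. $\mathcal{X}_i=\Delta(|\mathcal{A}_i|)$ (actions identified with unit vectors $e_{\alpha_i}$), $\mathcal{Z}=\mathcal{A}\times\prod_i\mathcal{X}_i$ with the product of the discrete and Euclidean topologies; $\mathfrak{B}(\mathcal{Z})$ its Borel $\sigma$-field; $\mathcal{C}_b(\mathcal{Z})$ the bounded continuous real functions with sup norm $\|\cdot\|_\infty$; $Pf(z)=\int P(z,dy)f(y)$. Step size $\epsilon>0$ with $0<\epsilon u_i(\alpha)<1$ for all $i,\alpha$. $P$ is the transition probability function of the unperturbed process: from $(\alpha(t),x(t))$ each agent $i$ independently draws $\alpha_i(t+1)$ according to $x_i(t)$, then $x_i(t+1)=x_i(t)+\epsilon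 u_i(\alpha(t+1))(e_{\alpha_i(t+1)}-x_i(t))$; $P^t$ is its $t$-step kernel. A pure strategy state is $(\alpha,x)$ with $x_i=e_{\alpha_i}$ for all $i$; $\mathcal{S}$ is the set of these. The support of a measure is the smallest closed set of full measure. *)

theory Defs
  imports "HOL-Probability.Probability"
begin

(* Actions: a finite type 'a; player i's action set is A i \<subseteq> UNIV.
   Actions are identified with unit vectors e_k = axis k 1 in real^'a (as in the paper).
   A state z = (a, x) lives in the Euclidean space (real^'a)^'i \<times> (real^'a)^'i;
   a $ i = e_{alpha_i}, x $ i \<in> simplex of A i. *)

type_synonym ('i,'a) state = "((real^'a)^'i) \<times> ((real^'a)^'i)"

definition simplex_on :: "'a set \<Rightarrow> (real^'a) set" where
  "simplex_on B = {v. (\<forall>k. 0 \<le> v $ k) \<and> (\<forall>k. k \<notin> B \<longrightarrow> v $ k = 0) \<and> (\<Sum>k\<in>UNIV. v $ k) = 1}"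

definition actvec :: "('i \<Rightarrow> 'a) \<Rightarrow> (real^'a)^'i" where
  "actvec \<alpha> = (\<chi> i. axis (\<alpha> i) 1)"

definition Zset :: "('i::finite \<Rightarrow> 'a::finite set) \<Rightarrow> ('i,'a) state set" where
  "Zset A = {(a, x). (\<exists>\<alpha>. (\<forall>i. \<alpha> i \<in> A i) \<and> a = actvec \<alpha>) \<and> (\<forall>i. x $ i \<in> simplex_on (A i))}"

(* Z with its Borel sigma-field (subspace topology = discrete \<times> Euclidean) *)
definition Zm :: "('i::finite \<Rightarrow> 'a::finite set) \<Rightarrow> ('i,'a) state measure" where
  "Zm A = restrict_space borel (Zset A)"

definition pure_states :: "('i::finite \<Rightarrow> 'a::finite set) \<Rightarrow> ('i,'a) state set" where
  "pure_states A = {z \<in> Zset A. snd z = fst z}"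

definition prof_pmf :: "(real^'a::finite)^'i::finite \<Rightarrow> ('i \<Rightarrow> 'a) pmf" where
  "prof_pmf x = embed_pmf (\<lambda>\<alpha>. \<Prod>i\<in>UNIV. x $ i $ (\<alpha> i))"

definition next_state ::
  "('i::finite \<Rightarrow> ('i \<Rightarrow> 'a::finite) \<Rightarrow> real) \<Rightarrow> real \<Rightarrow> ('i,'a) state \<Rightarrow> ('i \<Rightarrow> 'a) \<Rightarrow> ('i,'a) state" where
  "next_state u \<epsilon> z \<alpha>' =
     (actvec \<alpha>', \<chi> i. snd z $ i + (\<epsilon> * u i \<alpha>') *\<^sub>R (axis (\<alpha>' i) 1 - snd z $ i))"

definition Pker ::
  "('i::finite \<Rightarrow> 'a::finite set) \<Rightarrow> ('i \<Rightarrow> ('i \<Rightarrow> 'a) \<Rightarrow> real) \<Rightarrow> real \<Rightarrow> ('i,'a) state \<Rightarrow> ('i,'a) state measure" where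
  "Pker A u \<epsilon> z = distr (measure_pmf (prof_pmf (snd z))) (Zm A) (next_state u \<epsilon> z)"

primrec Pstep ::
  "('i::finite \<Rightarrow> 'a::finite set) \<Rightarrow> ('i \<Rightarrow> ('i \<Rightarrow> 'a) \<Rightarrow> real) \<Rightarrow> real \<Rightarrow> nat \<Rightarrow> ('i,'a) state \<Rightarrow> ('i,'a) state measure" where
  "Pstep A u \<epsilon> 0 z = return (Zm A) z"
| "Pstep A u \<epsilon> (Suc t) z = bind (Pstep A u \<epsilon> t z) (Pker A u \<epsilon>)"

definition kernel_apply :: "('b \<Rightarrow> 'b measure) \<Rightarrow> ('b \<Rightarrow> real) \<Rightarrow> 'b \<Rightarrow> real" where
  "kernel_apply K f z = (\<integral>y. f y \<partial>(K z))"

definition invariant_prob :: "'b measure \<Rightarrow> ('b \<Rightarrow> 'b measure) \<Rightarrow> 'b measure \<Rightarrow> bool" where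
  "invariant_prob M K \<mu> \<longleftrightarrow> \<mu> \<in> space (prob_algebra M) \<and>
     (\<forall>B\<in>sets M. emeasure \<mu> B = (\<integral>\<^sup>+ z. emeasure (K z) B \<partial>\<mu>))"

definition support_on :: "'b::topological_space set \<Rightarrow> 'b measure \<Rightarrow> 'b set" where
  "support_on S \<nu> = \<Inter>{C. closedin (top_of_set S) C \<and> emeasure \<nu> (S - C) = 0}"

end

theory Submission
  imports Defs
begin

locale game =
  fixes A :: "'i::finite \<Rightarrow> 'a::finite set"
    and u :: "'i \<Rightarrow> ('i \<Rightarrow> 'a) \<Rightarrow> real"
    and \<epsilon> :: real
  assumes A_ne: "\<And>i. A i \<noteq> {}"
    and u_pos: "\<And>i \<alpha>. (\<forall>j. \<alpha> j \<in> A j) \<Longrightarrow> 0 < u i \<alpha>"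
    and eps_pos: "0 < \<epsilon>"
    and eps_small: "\<And>i \<alpha>. (\<forall>j. \<alpha> j \<in> A j) \<Longrightarrow> \<epsilon> * u i \<alpha> < 1"
begin

abbreviation "Z \<equiv> Zset A"
definition "Prof = {\<beta>. \<forall>i. \<beta> i \<in> A i}"
definition pw :: "('i,'a) state \<Rightarrow> ('i \<Rightarrow> 'a) \<Rightarrow> real" where
  "pw z \<beta> = (\<Prod>i\<in>UNIV. snd z $ i $ \<beta> i)"
abbreviation "nx \<equiv> next_state u \<epsilon>"
definition T :: "(('i,'a) state \<Rightarrow> real) \<Rightarrow> ('i,'a) state \<Rightarrow> real" where
  "T g z = (\<Sum>\<beta>\<in>Prof. pw z \<beta> * g (nx z \<beta>))"
definition "ps \<alpha> = (actvec \<alpha>, actvec \<alpha>)"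
definition dd :: "('i \<Rightarrow> 'a) \<Rightarrow> ('i,'a) state \<Rightarrow> real" where
  "dd \<alpha> z = (\<Sum>i\<in>UNIV. 1 - snd z $ i $ \<alpha> i)"

lemma finite_Prof[simp]: "finite Prof" by simp

lemma Prof_ne: "Prof \<noteq> {}"
proof -
  have "(\<lambda>i. SOME k. k \<in> A i) \<in> Prof" unfolding Prof_def using A_ne by (auto intro: someI_ex simp: ex_in_conv[symmetric])
  thus ?thesis by auto
qed

lemma Prof_PiE: "Prof = PiE UNIV A"
  unfolding Prof_def PiE_def Pi_def extensional_def by auto

lemma ZD:
  assumes "z \<in> Z"
  shows "\<And>i k. 0 \<le> snd z $ i $ k" "\<And>i k. k \<notin> A i \<Longrightarrow> snd z $ i $ k = 0"
    "\<And>i. (\<Sum>k\<in>UNIV. snd z $ i $ k) = 1" "\<exists>\<alpha>\<in>Prof. fst z = actvec \<alpha>"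
  using assms unfolding Zset_def simplex_on_def Prof_def by auto

lemma Z_le1: assumes "z \<in> Z" shows "snd z $ i $ k \<le> 1"
proof -
  have "snd z $ i $ k \<le> (\<Sum>k\<in>UNIV. snd z $ i $ k)"
    by (rule member_le_sum) (auto simp: ZD[OF assms])
  thus ?thesis using ZD(3)[OF assms] by simp
qed

lemma sum_A: assumes "z \<in> Z" shows "(\<Sum>k\<in>A i. snd z $ i $ k) = 1"
proof -
  have "(\<Sum>k\<in>UNIV. snd z $ i $ k) = (\<Sum>k\<in>A i. snd z $ i $ k)"
    by (rule sum.mono_neutral_right) (auto simp: ZD[OF assms])
  thus ?thesis using ZD(3)[OF assms] by simp
qed

lemma pw_nonneg: "z \<in> Z \<Longrightarrow> 0 \<le> pw z \<beta>"
  unfolding pw_def by (auto intro: prod_nonneg simp: ZD)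

lemma pw_le1: "z \<in> Z \<Longrightarrow> pw z \<beta> \<le> 1"
  unfolding pw_def by (auto intro!: prod_le_1 simp: ZD Z_le1)

lemma pw_out: assumes "z \<in> Z" "\<beta> \<notin> Prof" shows "pw z \<beta> = 0"
proof -
  obtain i where "\<beta> i \<notin> A i" using assms(2) unfolding Prof_def by auto
  hence "snd z $ i $ \<beta> i = 0" using ZD(2)[OF assms(1)] by auto
  thus ?thesis unfolding pw_def by (intro prod_zero) auto
qed

lemma pw_sum: assumes "z \<in> Z" shows "(\<Sum>\<beta>\<in>Prof. pw z \<beta>) = 1"
proof -
  have "(\<Prod>i\<in>UNIV. \<Sum>k\<in>A i. snd z $ i $ k) = (\<Sum>g\<in>PiE UNIV A. \<Prod>i\<in>UNIV. snd z $ i $ g i)"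
    by (rule prod_sum_PiE) auto
  thus ?thesis using sum_A[OF assms] by (simp add: pw_def Prof_PiE)
qed

lemma pw_sum_UNIV: assumes "z \<in> Z" shows "(\<Sum>\<beta>\<in>UNIV. pw z \<beta>) = 1"
proof -
  have "(\<Sum>\<beta>\<in>UNIV. pw z \<beta>) = (\<Sum>\<beta>\<in>Prof. pw z \<beta>)"
    by (rule sum.mono_neutral_right) (auto simp: pw_out[OF assms])
  thus ?thesis using pw_sum[OF assms] by simp
qed

lemma actvec_nth: "actvec \<alpha> $ i $ k = (if k = \<alpha> i then 1 else 0)"
  unfolding actvec_def by (simp add: axis_def)

lemma actvec_inj: "actvec \<alpha> = actvec \<beta> \<Longrightarrow> \<alpha> = \<beta>"
proof
  fix i assume "actvec \<alpha> = actvec \<beta>"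
  hence "actvec \<alpha> $ i $ \<alpha> i = actvec \<beta> $ i $ \<alpha> i" by simp
  thus "\<alpha> i = \<beta> i" by (simp add: actvec_nth split: if_splits)
qed

lemma nx_fst[simp]: "fst (nx z \<beta>) = actvec \<beta>"
  unfolding next_state_def by simp

lemma nx_comp: "snd (nx z \<beta>) $ i $ k =
   (1 - \<epsilon> * u i \<beta>) * snd z $ i $ k + \<epsilon> * u i \<beta> * (if k = \<beta> i then 1 else 0)"
  unfolding next_state_def by (simp add: axis_def algebra_simps)

lemma c_bounds: "\<beta> \<in> Prof \<Longrightarrow> 0 < \<epsilon> * u i \<beta> \<and> \<epsilon> * u i \<beta> < 1"
  using u_pos eps_small eps_pos unfolding Prof_def by auto

lemma nx_Z: assumes z: "z \<in> Z" and b: "\<beta> \<in> Prof" shows "nx z \<beta> \<in> Z"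
proof -
  have c: "0 < \<epsilon> * u i \<beta>" "\<epsilon> * u i \<beta> < 1" for i using c_bounds[OF b] by auto
  have bA: "\<beta> i \<in> A i" for i using b unfolding Prof_def by auto
  have "snd (nx z \<beta>) $ i \<in> simplex_on (A i)" for i
  proof -
    have "0 \<le> snd (nx z \<beta>) $ i $ k" for k
      unfolding nx_comp using c[of i] ZD(1)[OF z, of i k] by auto
    moreover have "snd (nx z \<beta>) $ i $ k = 0" if "k \<notin> A i" for k
      unfolding nx_comp using ZD(2)[OF z that] bA[of i] that by auto
    moreover have "(\<Sum>k\<in>UNIV. snd (nx z \<beta>) $ i $ k) = 1"
      unfolding nx_comp by (simp add: sum.distrib sum_distrib_left[symmetric] ZD(3)[OF z])
    ultimately show ?thesis unfolding simplex_on_def by auto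
  qed
  moreover have "\<exists>\<alpha>. (\<forall>i. \<alpha> i \<in> A i) \<and> fst (nx z \<beta>) = actvec \<alpha>"
    using b unfolding Prof_def by auto
  ultimately show ?thesis unfolding Zset_def by (cases "nx z \<beta>") auto
qed

lemma ps_Z: assumes "\<alpha> \<in> Prof" shows "ps \<alpha> \<in> Z"
  using assms unfolding Zset_def ps_def simplex_on_def Prof_def
  by (auto simp: actvec_nth sum.delta)

lemma pw_ps: "pw (ps \<alpha>) \<beta> = (if \<beta> = \<alpha> then 1 else 0)"
proof (cases "\<beta> = \<alpha>")
  case True thus ?thesis unfolding pw_def ps_def by (simp add: actvec_nth)
next
  case False
  then obtain i where "\<beta> i \<noteq> \<alpha> i" by auto
  hence "snd (ps \<alpha>) $ i $ \<beta> i = 0" unfolding ps_def by (simp add: actvec_nth)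
  thus ?thesis using False unfolding pw_def by (auto intro!: prod_zero)
qed

lemma nx_ps: "nx (ps \<alpha>) \<alpha> = ps \<alpha>"
proof -
  have "snd (nx (ps \<alpha>) \<alpha>) = actvec \<alpha>"
    by (simp add: vec_eq_iff nx_comp ps_def actvec_nth algebra_simps)
  thus ?thesis unfolding ps_def by (metis nx_fst prod.collapse)
qed

definition "r = Max ((\<lambda>(i,\<beta>). 1 - \<epsilon> * u i \<beta>) ` (UNIV \<times> Prof))"

lemma r_ge: "\<beta> \<in> Prof \<Longrightarrow> 1 - \<epsilon> * u i \<beta> \<le> r"
  unfolding r_def by (rule Max_ge) auto

lemma r_bounds: "0 < r" "r < 1"
proof -
  have ne: "(\<lambda>(i,\<beta>). 1 - \<epsilon> * u i \<beta>) ` (UNIV \<times> Prof) \<noteq> {}" using Prof_ne by auto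
  have "r \<in> (\<lambda>(i,\<beta>). 1 - \<epsilon> * u i \<beta>) ` (UNIV \<times> Prof)"
    unfolding r_def by (rule Max_in) (use ne in auto)
  then obtain i \<beta> where "\<beta> \<in> Prof" "r = 1 - \<epsilon> * u i \<beta>" by auto
  thus "0 < r" "r < 1" using c_bounds[of \<beta> i] by auto
qed

lemma dd_nonneg: "z \<in> Z \<Longrightarrow> 0 \<le> dd \<alpha> z"
  unfolding dd_def by (auto intro!: sum_nonneg simp: Z_le1)

lemma dd_le: "z \<in> Z \<Longrightarrow> dd \<alpha> z \<le> real CARD('i)"
proof -
  assume z: "z \<in> Z"
  have "dd \<alpha> z \<le> (\<Sum>i\<in>(UNIV::'i set). 1)"
    unfolding dd_def by (rule sum_mono) (use ZD(1)[OF z] in auto)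
  thus ?thesis by simp
qed

lemma prod_ge_1_minus_sum:
  fixes a :: "'k \<Rightarrow> real"
  assumes "finite I" "\<And>i. i \<in> I \<Longrightarrow> 0 \<le> a i \<and> a i \<le> 1"
  shows "1 - (\<Sum>i\<in>I. 1 - a i) \<le> (\<Prod>i\<in>I. a i)"
  using assms
proof (induction I rule: finite_induct)
  case (insert x F)
  have IH: "1 - (\<Sum>i\<in>F. 1 - a i) \<le> (\<Prod>i\<in>F. a i)" using insert by auto
  have ax: "0 \<le> a x" "a x \<le> 1" using insert by auto
  have P: "0 \<le> (\<Prod>i\<in>F. a i)" "(\<Prod>i\<in>F. a i) \<le> 1" using insert by (auto intro: prod_nonneg prod_le_1)
  have "1 - (\<Sum>i\<in>insert x F. 1 - a i) = (1 - (\<Sum>i\<in>F. 1 - a i)) - (1 - a x)"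
    using insert by simp
  also have "\<dots> \<le> (\<Prod>i\<in>F. a i) - (1 - a x)" using IH by simp
  also have "\<dots> \<le> a x * (\<Prod>i\<in>F. a i)"
  proof -
    have "0 \<le> (1 - a x) * (1 - (\<Prod>i\<in>F. a i))" using ax P by simp
    thus ?thesis by (simp add: algebra_simps)
  qed
  finally show ?case using insert by simp
qed simp

lemma pw_ge_dd: "z \<in> Z \<Longrightarrow> 1 - dd \<alpha> z \<le> pw z \<alpha>"
  unfolding dd_def pw_def by (rule prod_ge_1_minus_sum) (auto simp: ZD Z_le1)

lemma dd_nx: assumes z: "z \<in> Z" and a: "\<alpha> \<in> Prof"
  shows "dd \<alpha> (nx z \<alpha>) \<le> r * dd \<alpha> z"
proof -
  have "dd \<alpha> (nx z \<alpha>) = (\<Sum>i\<in>UNIV. (1 - \<epsilon> * u i \<alpha>) * (1 - snd z $ i $ \<alpha> i))"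
    unfolding dd_def nx_comp by (simp add: algebra_simps)
  also have "\<dots> \<le> (\<Sum>i\<in>UNIV. r * (1 - snd z $ i $ \<alpha> i))"
    by (rule sum_mono, rule mult_right_mono) (auto simp: r_ge[OF a] Z_le1[OF z])
  finally show ?thesis unfolding dd_def by (simp add: sum_distrib_left)
qed

lemma pw_nx: assumes z: "z \<in> Z" and a: "\<alpha> \<in> Prof"
  shows "pw z \<alpha> \<le> pw (nx z \<alpha>) \<alpha>"
  unfolding pw_def
proof (rule prod_mono, safe)
  fix i
  have c: "0 < \<epsilon> * u i \<alpha>" "\<epsilon> * u i \<alpha> < 1" using c_bounds[OF a] by auto
  show "0 \<le> snd z $ i $ \<alpha> i" using ZD(1)[OF z] by auto
  show "snd z $ i $ \<alpha> i \<le> snd (nx z \<alpha>) $ i $ \<alpha> i"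
  proof -
    have "0 \<le> \<epsilon> * u i \<alpha> * (1 - snd z $ i $ \<alpha> i)" using c Z_le1[OF z, of i "\<alpha> i"] by simp
    thus ?thesis unfolding nx_comp by (simp add: algebra_simps)
  qed
qed

abbreviation Tp :: "nat \<Rightarrow> (('i,'a) state \<Rightarrow> real) \<Rightarrow> ('i,'a) state \<Rightarrow> real" where
  "Tp t \<equiv> T ^^ t"

lemma Tp_Suc: "Tp (Suc t) g = T (Tp t g)" by simp
lemma Tp_add: "Tp (m + n) g = Tp m (Tp n g)" by (simp add: funpow_add)

lemma T_cong: assumes "z \<in> Z" "\<And>y. y \<in> Z \<Longrightarrow> g y = h y" shows "T g z = T h z"
  unfolding T_def using assms nx_Z by (intro sum.cong) auto

lemma Tp_cong: assumes "z \<in> Z" "\<And>y. y \<in> Z \<Longrightarrow> g y = h y" shows "Tp t g z = Tp t h z"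
  using assms(1)
proof (induction t arbitrary: z)
  case 0 thus ?case using assms by simp
next
  case (Suc t) thus ?case by (simp only: Tp_Suc) (rule T_cong; simp)
qed

lemma T_lin: "T (\<lambda>y. a * g y + b * h y) z = a * T g z + b * T h z"
  unfolding T_def by (simp add: algebra_simps sum.distrib sum_distrib_left)

lemma Tp_lin: "Tp t (\<lambda>y. a * g y + b * h y) = (\<lambda>z. a * Tp t g z + b * Tp t h z)"
proof (induction t)
  case (Suc t) thus ?case by (simp only: Tp_Suc Suc T_lin)
qed simp

lemma T_const: "z \<in> Z \<Longrightarrow> T (\<lambda>_. c) z = c"
  unfolding T_def by (simp add: sum_distrib_right[symmetric] pw_sum)

lemma Tp_const: "z \<in> Z \<Longrightarrow> Tp t (\<lambda>_. c) z = c"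
proof (induction t arbitrary: z)
  case (Suc t)
  have "Tp (Suc t) (\<lambda>_. c) z = T (\<lambda>_. c) z" unfolding Tp_Suc by (rule T_cong) (use Suc in auto)
  thus ?case using T_const Suc by simp
qed simp

lemma Tp_affine: assumes "z \<in> Z" shows "Tp t (\<lambda>y. a * g y + b) z = a * Tp t g z + b"
proof -
  have "Tp t (\<lambda>y. a * g y + b * (\<lambda>_. 1) y) z = a * Tp t g z + b * Tp t (\<lambda>_. 1) z"
    by (simp only: Tp_lin)
  thus ?thesis using Tp_const[OF assms] by simp
qed

lemma Tp_diff: "Tp t (\<lambda>y. g y - h y) z = Tp t g z - Tp t h z"
  using fun_cong[OF Tp_lin[of t 1 g "-1" h], of z] by simp

lemma Tp_scale: "Tp t (\<lambda>y. a * g y) z = a * Tp t g z"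
  using fun_cong[OF Tp_lin[of t a g 0 g], of z] by simp

lemma T_mono: assumes "z \<in> Z" "\<And>y. y \<in> Z \<Longrightarrow> g y \<le> h y" shows "T g z \<le> T h z"
  unfolding T_def using assms nx_Z pw_nonneg
  by (intro sum_mono mult_left_mono) auto

lemma Tp_mono: assumes "z \<in> Z" "\<And>y. y \<in> Z \<Longrightarrow> g y \<le> h y" shows "Tp t g z \<le> Tp t h z"
  using assms(1)
proof (induction t arbitrary: z)
  case 0 thus ?case using assms by simp
next
  case (Suc t) thus ?case by (simp only: Tp_Suc) (rule T_mono; simp)
qed

lemma Tp_bounds: assumes "z \<in> Z" "\<And>y. y \<in> Z \<Longrightarrow> lo \<le> g y \<and> g y \<le> hi"
  shows "lo \<le> Tp t g z" "Tp t g z \<le> hi"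
proof -
  have "Tp t (\<lambda>_. lo) z \<le> Tp t g z" by (rule Tp_mono) (use assms in auto)
  thus "lo \<le> Tp t g z" using Tp_const[OF assms(1)] by simp
  have "Tp t g z \<le> Tp t (\<lambda>_. hi) z" by (rule Tp_mono) (use assms in auto)
  thus "Tp t g z \<le> hi" using Tp_const[OF assms(1)] by simp
qed

lemma Tp_abs: assumes "z \<in> Z" shows "\<bar>Tp t g z\<bar> \<le> Tp t (\<lambda>y. \<bar>g y\<bar>) z"
proof -
  have "Tp t g z \<le> Tp t (\<lambda>y. \<bar>g y\<bar>) z" by (rule Tp_mono) (use assms in auto)
  moreover have "Tp t (\<lambda>y. - 1 * \<bar>g y\<bar>) z \<le> Tp t g z" by (rule Tp_mono) (use assms in auto)
  moreover have "Tp t (\<lambda>y. - 1 * \<bar>g y\<bar>) z = - 1 * Tp t (\<lambda>y. \<bar>g y\<bar>) z" by (rule Tp_scale)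
  ultimately show ?thesis by linarith
qed

lemma Tp_lower: assumes "z \<in> Z" "\<And>y. y \<in> Z \<Longrightarrow> lo \<le> g y" shows "lo \<le> Tp t g z"
proof -
  have "Tp t (\<lambda>_. lo) z \<le> Tp t g z" by (rule Tp_mono) (use assms in auto)
  thus ?thesis using Tp_const[OF assms(1)] by simp
qed

lemma T_split_upper: assumes z: "z \<in> Z" and a: "\<alpha> \<in> Prof" and h: "\<And>y. y \<in> Z \<Longrightarrow> h y \<le> 1"
  shows "T h z \<le> pw z \<alpha> * h (nx z \<alpha>) + (1 - pw z \<alpha>)"
proof -
  have "T h z = pw z \<alpha> * h (nx z \<alpha>) + (\<Sum>\<beta>\<in>Prof - {\<alpha>}. pw z \<beta> * h (nx z \<beta>))"
    unfolding T_def using a by (simp add: sum.remove)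
  also have "(\<Sum>\<beta>\<in>Prof - {\<alpha>}. pw z \<beta> * h (nx z \<beta>)) \<le> (\<Sum>\<beta>\<in>Prof - {\<alpha>}. pw z \<beta>)"
    by (rule sum_mono) (simp add: mult_left_le h nx_Z[OF z] pw_nonneg[OF z])
  also have "(\<Sum>\<beta>\<in>Prof - {\<alpha>}. pw z \<beta>) = 1 - pw z \<alpha>"
    using pw_sum[OF z] a by (simp add: sum_diff1)
  finally show ?thesis by simp
qed

lemma T_split_lower: assumes z: "z \<in> Z" and a: "\<alpha> \<in> Prof" and h: "\<And>y. y \<in> Z \<Longrightarrow> 0 \<le> h y"
  shows "pw z \<alpha> * h (nx z \<alpha>) \<le> T h z"
proof -
  have "T h z = pw z \<alpha> * h (nx z \<alpha>) + (\<Sum>\<beta>\<in>Prof - {\<alpha>}. pw z \<beta> * h (nx z \<beta>))"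
    unfolding T_def using a by (simp add: sum.remove)
  moreover have "0 \<le> (\<Sum>\<beta>\<in>Prof - {\<alpha>}. pw z \<beta> * h (nx z \<beta>))"
    by (rule sum_nonneg) (use h nx_Z[OF z] pw_nonneg[OF z] in auto)
  ultimately show ?thesis by simp
qed

lemma T_ps: assumes "\<alpha> \<in> Prof" shows "T g (ps \<alpha>) = g (ps \<alpha>)"
proof -
  have "\<And>\<beta>. pw (ps \<alpha>) \<beta> * g (nx (ps \<alpha>) \<beta>) = (if \<beta> = \<alpha> then g (ps \<alpha>) else 0)"
    by (simp add: pw_ps nx_ps)
  thus ?thesis unfolding T_def using assms by simp
qed

lemma Tp_ps: assumes "\<alpha> \<in> Prof" shows "Tp t g (ps \<alpha>) = g (ps \<alpha>)"
  by (induction t) (simp_all add: T_ps[OF assms])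

definition "G \<alpha> \<eta> = {y \<in> Z. fst y = actvec \<alpha> \<and> dd \<alpha> y \<le> \<eta>}"
definition "G' \<alpha> \<eta> = {y \<in> Z. dd \<alpha> y \<le> \<eta>}"
definition "Bad \<eta> = Z - (\<Union>\<alpha>\<in>Prof. G \<alpha> \<eta>)"

lemma ind_bounds: "0 \<le> (indicator S y :: real) \<and> (indicator S y :: real) \<le> 1"
  by (auto simp: indicator_def)

lemma stab1:
  assumes a: "\<alpha> \<in> Prof" and z: "z \<in> Z" and d: "dd \<alpha> z \<le> \<eta>0"
  shows "Tp (Suc s) (indicator (Z - G \<alpha> \<eta>0)) z \<le> dd \<alpha> z / (1 - r)"
  using z d
proof (induction s arbitrary: z)
  case 0
  have "r * dd \<alpha> z \<le> dd \<alpha> z" using dd_nonneg[OF 0(1), of \<alpha>] r_bounds by (simp add: mult_left_le_one_le)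
  hence nxG: "nx z \<alpha> \<in> G \<alpha> \<eta>0"
    using nx_Z[OF 0(1) a] dd_nx[OF 0(1) a] 0(2) unfolding G_def by auto
  have "Tp (Suc 0) (indicator (Z - G \<alpha> \<eta>0)) z \<le>
     pw z \<alpha> * indicator (Z - G \<alpha> \<eta>0) (nx z \<alpha>) + (1 - pw z \<alpha>)"
    by simp (rule T_split_upper[OF 0(1) a], simp add: indicator_def)
  also have "\<dots> = 1 - pw z \<alpha>" using nxG by simp
  also have "\<dots> \<le> dd \<alpha> z" using pw_ge_dd[OF 0(1), of \<alpha>] by linarith
  also have "\<dots> \<le> dd \<alpha> z / (1 - r)"
    using dd_nonneg[OF 0(1)] r_bounds by (simp add: le_divide_eq mult_left_le)
  finally show ?case .
next
  case (Suc s)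
  have nxZ: "nx z \<alpha> \<in> Z" using nx_Z[OF Suc(2) a] .
  have dn: "dd \<alpha> (nx z \<alpha>) \<le> r * dd \<alpha> z" using dd_nx[OF Suc(2) a] .
  have "r * dd \<alpha> z \<le> dd \<alpha> z" using dd_nonneg[OF Suc(2), of \<alpha>] r_bounds by (simp add: mult_left_le_one_le)
  hence dn2: "dd \<alpha> (nx z \<alpha>) \<le> \<eta>0" using dn Suc(3) by linarith
  let ?g = "Tp (Suc s) (indicator (Z - G \<alpha> \<eta>0))"
  have "Tp (Suc (Suc s)) (indicator (Z - G \<alpha> \<eta>0)) z = T ?g z" by simp
  also have "\<dots> \<le> pw z \<alpha> * ?g (nx z \<alpha>) + (1 - pw z \<alpha>)"
    by (rule T_split_upper[OF Suc(2) a]) (rule Tp_bounds(2), simp, rule ind_bounds)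
  also have "\<dots> \<le> pw z \<alpha> * (dd \<alpha> (nx z \<alpha>) / (1 - r)) + dd \<alpha> z"
  proof (rule add_mono)
    show "pw z \<alpha> * ?g (nx z \<alpha>) \<le> pw z \<alpha> * (dd \<alpha> (nx z \<alpha>) / (1 - r))"
      using Suc.IH[OF nxZ dn2] pw_nonneg[OF Suc(2)] by (intro mult_left_mono) auto
    show "1 - pw z \<alpha> \<le> dd \<alpha> z" using pw_ge_dd[OF Suc(2), of \<alpha>] by linarith
  qed
  also have "\<dots> \<le> 1 * (r * dd \<alpha> z / (1 - r)) + dd \<alpha> z"
    using pw_le1[OF Suc(2)] dn r_bounds dd_nonneg[OF nxZ, of \<alpha>]
    by (intro add_mono mult_mono divide_right_mono) auto
  also have "\<dots> = dd \<alpha> z / (1 - r)" using r_bounds by (simp add: field_simps)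
  finally show ?case .
qed

lemma stab0:
  assumes a: "\<alpha> \<in> Prof" and z: "z \<in> G \<alpha> \<eta>0"
  shows "Tp s (indicator (Z - G \<alpha> \<eta>0)) z \<le> dd \<alpha> z / (1 - r)"
proof (cases s)
  case 0
  have "0 \<le> dd \<alpha> z / (1 - r)" using z dd_nonneg r_bounds unfolding G_def by auto
  thus ?thesis using 0 z by simp
next
  case (Suc s') thus ?thesis using stab1[OF a] z unfolding G_def by auto
qed

lemma absorbA:
  assumes a: "\<alpha> \<in> Prof"
  shows "z \<in> Z \<Longrightarrow> 0 \<le> D \<Longrightarrow> D \<le> (1 - r) / 2 \<Longrightarrow> dd \<alpha> z \<le> D \<Longrightarrow>
     1 - D / (1 - r) \<le> Tp m (indicator (G' \<alpha> (r ^ m * D))) z"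
proof (induction m arbitrary: z D)
  case 0
  thus ?case unfolding G'_def using r_bounds by (auto simp: indicator_def)
next
  case (Suc m)
  note z = Suc(2)
  have nxZ: "nx z \<alpha> \<in> Z" using nx_Z[OF z a] .
  have dn: "dd \<alpha> (nx z \<alpha>) \<le> r * D"
    using dd_nx[OF z a] Suc(5) r_bounds by (meson mult_left_mono order_trans less_imp_le)
  have "r * D \<le> D" using Suc(3) r_bounds by (simp add: mult_left_le_one_le)
  hence rD: "0 \<le> r * D" "r * D \<le> (1 - r) / 2" using Suc(3,4) r_bounds by auto
  have IH: "1 - r * D / (1 - r) \<le> Tp m (indicator (G' \<alpha> (r ^ m * (r * D)))) (nx z \<alpha>)"
    by (rule Suc.IH[OF nxZ rD dn])
  have eq: "r ^ m * (r * D) = r ^ Suc m * D" by (simp add: algebra_simps)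
  let ?g = "Tp m (indicator (G' \<alpha> (r ^ Suc m * D)))"
  have p: "1 - D \<le> pw z \<alpha>" using pw_ge_dd[OF z, of \<alpha>] Suc(5) by simp
  have "r * D \<le> D" using Suc(3) r_bounds by (simp add: mult_left_le_one_le)
  hence D1: "D \<le> 1 - r" "r * D / (1 - r) \<le> 1"
    using Suc(3,4) r_bounds by (auto simp: field_simps)
  have "(1 - D) * (1 - r * D / (1 - r)) \<le> pw z \<alpha> * ?g (nx z \<alpha>)"
    using IH p D1 r_bounds Suc(3) unfolding eq by (intro mult_mono) auto
  also have "\<dots> \<le> T ?g z"
    by (rule T_split_lower[OF z a]) (rule Tp_bounds(1), simp, rule ind_bounds)
  also have "T ?g z = Tp (Suc m) (indicator (G' \<alpha> (r ^ Suc m * D))) z" by simp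
  finally have *: "(1 - D) * (1 - r * D / (1 - r)) \<le> Tp (Suc m) (indicator (G' \<alpha> (r ^ Suc m * D))) z" .
  have "1 - D / (1 - r) \<le> (1 - D) * (1 - r * D / (1 - r))"
  proof -
    have "(1 - D) * (1 - r * D / (1 - r)) = 1 - D / (1 - r) + r * D * D / (1 - r)"
    proof -
      have ne: "1 - r \<noteq> 0" using r_bounds by simp
      have "(1 - D) * (1 - r * D / (1 - r)) = ((1 - D) * ((1 - r) - r * D)) / (1 - r)"
        using ne by (simp add: field_simps)
      also have "\<dots> = ((1 - r) - D + r * D * D) / (1 - r)" by (simp add: algebra_simps)
      also have "\<dots> = 1 - D / (1 - r) + r * D * D / (1 - r)"
        using ne by (simp add: diff_divide_distrib add_divide_distrib)
      finally show ?thesis .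
    qed
    moreover have "0 \<le> r * D * D / (1 - r)" using r_bounds Suc(3) by simp
    ultimately show ?thesis by linarith
  qed
  with * show ?case by linarith
qed

lemma absorbB:
  assumes a: "\<alpha> \<in> Prof" and H: "\<And>y. y \<in> Z \<Longrightarrow> 0 \<le> H y" and c: "0 \<le> c" and q: "0 \<le> q"
  shows "z \<in> Z \<Longrightarrow> q \<le> pw z \<alpha> \<Longrightarrow> dd \<alpha> z \<le> D \<Longrightarrow>
    (\<And>y. y \<in> Z \<Longrightarrow> dd \<alpha> y \<le> r ^ J * D \<Longrightarrow> c \<le> H y) \<Longrightarrow> q ^ J * c \<le> Tp J H z"
proof (induction J arbitrary: z D)
  case 0 thus ?case by simp
next
  case (Suc J)
  note z = Suc(2)
  have nxZ: "nx z \<alpha> \<in> Z" using nx_Z[OF z a] .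
  have dn: "dd \<alpha> (nx z \<alpha>) \<le> r * D"
    using dd_nx[OF z a] Suc(4) r_bounds by (meson mult_left_mono order_trans less_imp_le)
  have pn: "q \<le> pw (nx z \<alpha>) \<alpha>" using pw_nx[OF z a] Suc(3) by simp
  have IH: "q ^ J * c \<le> Tp J H (nx z \<alpha>)"
    by (rule Suc.IH[OF nxZ pn dn]) (rule Suc(5), auto simp: algebra_simps)
  have "q ^ Suc J * c = q * (q ^ J * c)" by simp
  also have "\<dots> \<le> pw z \<alpha> * Tp J H (nx z \<alpha>)"
    using IH Suc(3) q c by (intro mult_mono) auto
  also have "\<dots> \<le> T (Tp J H) z"
    by (rule T_split_lower[OF z a]) (rule Tp_lower, simp, rule H)
  finally show ?case by simp
qed

lemma exists_big: assumes z: "z \<in> Z" shows "\<exists>\<alpha>\<in>Prof. 1 / real (card Prof) \<le> pw z \<alpha>"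
proof (rule ccontr)
  assume "\<not> ?thesis"
  hence lt: "\<And>\<alpha>. \<alpha> \<in> Prof \<Longrightarrow> pw z \<alpha> < 1 / real (card Prof)" by auto
  have "(\<Sum>\<alpha>\<in>Prof. pw z \<alpha>) < (\<Sum>\<alpha>\<in>Prof. 1 / real (card Prof))"
    by (rule sum_strict_mono) (use Prof_ne lt in auto)
  also have "\<dots> = 1" using Prof_ne by simp
  finally show False using pw_sum[OF z] by simp
qed

lemma absorbC: "\<exists>\<delta> J. 0 < \<delta> \<and> \<delta> \<le> 1 \<and> (\<forall>m. \<forall>z\<in>Z. \<exists>\<alpha>\<in>Prof.
   \<delta> \<le> Tp (J + m) (indicator (G' \<alpha> (r ^ (J + m) * real CARD('i)))) z)"
proof -
  define n where "n = real CARD('i)"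
  have n: "0 < n" unfolding n_def by simp
  obtain J where J: "r ^ J < (1 - r) / (2 * n)"
    using real_arch_pow_inv[of "(1 - r) / (2 * n)" r] r_bounds n by auto
  define D0 where "D0 = r ^ J * n"
  have D0: "0 \<le> D0" "D0 \<le> (1 - r) / 2"
    using J n r_bounds unfolding D0_def by (auto simp: field_simps)
  define q where "q = 1 / real (card Prof)"
  have q: "0 < q" unfolding q_def using Prof_ne by (simp add: card_gt_0_iff)
  define \<delta> where "\<delta> = min (q ^ J * (1/2)) 1"
  have "\<forall>m. \<forall>z\<in>Z. \<exists>\<alpha>\<in>Prof. \<delta> \<le> Tp (J + m) (indicator (G' \<alpha> (r ^ (J + m) * n))) z"
  proof (intro allI ballI)
    fix m z assume z: "z \<in> Z"
    obtain \<alpha> where a: "\<alpha> \<in> Prof" and pa: "q \<le> pw z \<alpha>" using exists_big[OF z] unfolding q_def by auto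
    define H where "H = Tp m (indicator (G' \<alpha> (r ^ m * D0)))"
    have H0: "\<And>y. y \<in> Z \<Longrightarrow> 0 \<le> H y" unfolding H_def by (rule Tp_lower) (auto)
    have Hc: "1/2 \<le> H y" if "y \<in> Z" "dd \<alpha> y \<le> r ^ J * n" for y
    proof -
      have "1 - D0 / (1 - r) \<le> H y" unfolding H_def
        by (rule absorbA[OF a that(1) D0]) (use that D0_def in auto)
      moreover have "D0 / (1 - r) \<le> 1/2" using D0 r_bounds by (simp add: field_simps)
      ultimately show ?thesis by linarith
    qed
    have "q ^ J * (1/2) \<le> Tp J H z"
      by (rule absorbB[OF a H0, where c="1/2" and q=q and D=n]) (use q pa z dd_le[OF z] Hc in \<open>auto simp: n_def\<close>)
    moreover have "Tp J H z = Tp (J + m) (indicator (G' \<alpha> (r ^ (J + m) * n))) z"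
      unfolding H_def Tp_add D0_def by (simp add: power_add algebra_simps)
    ultimately show "\<exists>\<alpha>\<in>Prof. \<delta> \<le> Tp (J + m) (indicator (G' \<alpha> (r ^ (J + m) * n))) z"
      using a unfolding \<delta>_def by force
  qed
  moreover have "0 < \<delta>" "\<delta> \<le> 1" unfolding \<delta>_def using q by auto
  ultimately show ?thesis unfolding n_def by blast
qed

lemma Bad_sub: "\<alpha> \<in> Prof \<Longrightarrow> Bad \<eta> \<subseteq> Z - G \<alpha> \<eta>"
  unfolding Bad_def by auto


lemma absorb:
  assumes eta0: "0 < \<eta>0" and ep: "0 < ep"
  shows "\<exists>T0. \<forall>t\<ge>T0. \<forall>z\<in>Z. Tp t (indicator (Bad \<eta>0)) z \<le> ep"
proof -
  obtain \<delta> J where d: "0 < \<delta>" "\<delta> \<le> 1" and dJ: "\<And>m z. z \<in> Z \<Longrightarrow> \<exists>\<alpha>\<in>Prof.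
     \<delta> \<le> Tp (J + m) (indicator (G' \<alpha> (r ^ (J + m) * real CARD('i)))) z"
    using absorbC by blast
  define n where "n = real CARD('i)"
  have n: "0 < n" unfolding n_def by simp
  define \<eta> where "\<eta> = min \<eta>0 ((1 - r) * \<delta> * ep / 2)"
  have eta: "0 < \<eta>" "\<eta> \<le> \<eta>0" "\<eta> \<le> (1 - r) * \<delta> * ep / 2"
    unfolding \<eta>_def using eta0 d ep r_bounds by auto
  define e where "e = \<eta> / (1 - r)"
  have e: "0 \<le> e" "e \<le> \<delta> * ep / 2"
    using eta r_bounds unfolding e_def by (auto simp: field_simps)
  obtain m where m: "r ^ m < \<eta> / n" using real_arch_pow_inv[of "\<eta> / n" r] eta n r_bounds by auto
  define M where "M = J + Suc m"
  have M1: "1 \<le> M" unfolding M_def by simp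
  have "r ^ M \<le> r ^ m" unfolding M_def using r_bounds by (intro power_decreasing) auto
  hence "n * r ^ M \<le> n * r ^ m" using n by (intro mult_left_mono) auto
  moreover have "n * r ^ m < \<eta>" using m n by (simp add: field_simps)
  ultimately have rM: "r ^ M * n \<le> \<eta>" by (simp add: mult.commute)
  have dM: "\<And>z. z \<in> Z \<Longrightarrow> \<exists>\<alpha>\<in>Prof. \<delta> \<le> Tp M (indicator (G' \<alpha> (r ^ M * n))) z"
    unfolding M_def n_def by (rule dJ)
  let ?B = "indicator (Bad \<eta>0) :: ('i,'a) state \<Rightarrow> real"
  have near: "Tp s ?B y \<le> e" if "1 \<le> s" "\<alpha> \<in> Prof" "y \<in> G' \<alpha> (r ^ M * n)" for s y \<alpha>
  proof -
    have "s \<noteq> 0" using that(1) by simp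
    then obtain s' where s': "s = Suc s'" using not0_implies_Suc by blast
    have yZ: "y \<in> Z" and dy0: "dd \<alpha> y \<le> r ^ M * n" using that(3) unfolding G'_def by auto
    have dy: "dd \<alpha> y \<le> \<eta>" using dy0 rM by linarith
    have "Tp s ?B y \<le> Tp s (indicator (Z - G \<alpha> \<eta>0)) y"
    proof (rule Tp_mono[OF yZ])
      fix x assume "x \<in> Z"
      show "?B x \<le> indicator (Z - G \<alpha> \<eta>0) x"
      proof -
        have "x \<in> Bad \<eta>0 \<Longrightarrow> x \<in> Z - G \<alpha> \<eta>0" using Bad_sub[OF that(2), of \<eta>0] by blast
        thus ?thesis unfolding indicator_def by auto
      qed
    qed
    also have "\<dots> \<le> dd \<alpha> y / (1 - r)" unfolding s' by (rule stab1[OF that(2) yZ]) (use dy eta in linarith)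
    also have "\<dots> \<le> e" unfolding e_def using dy r_bounds by (simp add: divide_right_mono)
    finally show ?thesis .
  qed
  have main: "\<forall>s\<ge>1. \<forall>z\<in>Z. Tp (s + k * M) ?B z \<le> e * (\<Sum>j<k. (1 - \<delta>) ^ j) + (1 - \<delta>) ^ k" for k
  proof (induction k)
    case 0 show ?case
    proof (intro allI impI ballI)
      fix s :: nat and z assume "z \<in> Z"
      have "Tp s ?B z \<le> 1" by (rule Tp_bounds(2)[where lo=0, OF \<open>z \<in> Z\<close>]) (rule ind_bounds)
      thus "Tp (s + 0 * M) ?B z \<le> e * (\<Sum>j<0. (1 - \<delta>) ^ j) + (1 - \<delta>) ^ 0" by simp
    qed
  next
    case (Suc k)
    define c where "c = e * (\<Sum>j<k. (1 - \<delta>) ^ j) + (1 - \<delta>) ^ k"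
    have "0 \<le> (\<Sum>j<k. (1 - \<delta>) ^ j)" using d by (intro sum_nonneg) auto
    hence c0: "0 \<le> c" unfolding c_def using e d by (intro add_nonneg_nonneg mult_nonneg_nonneg) auto
    show ?case
    proof (intro allI impI ballI)
      fix s :: nat and z assume s: "1 \<le> s" and z: "z \<in> Z"
      obtain \<alpha> where a: "\<alpha> \<in> Prof" and w: "\<delta> \<le> Tp M (indicator (G' \<alpha> (r ^ M * n))) z"
        using dM[OF z] by blast
      define gG where "gG = (indicator (G' \<alpha> (r ^ M * n)) :: ('i,'a) state \<Rightarrow> real)"
      define h where "h = Tp (s + k * M) ?B"
      have hb: "h y \<le> (e - c) * gG y + c" if "y \<in> Z" for y
      proof (cases "y \<in> G' \<alpha> (r ^ M * n)")
        case True thus ?thesis unfolding h_def gG_def using near[OF _ a True, of "s + k * M"] s by simp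
      next
        case False
        have "h y \<le> c" unfolding h_def c_def using Suc.IH s that by blast
        thus ?thesis using False unfolding gG_def by simp
      qed
      have w1: "Tp M gG z \<le> 1" unfolding gG_def by (rule Tp_bounds(2)[where lo=0, OF z]) (simp add: indicator_def)
      have "s + Suc k * M = M + (s + k * M)" by simp
      hence "Tp (s + Suc k * M) ?B z = Tp M h z"
        unfolding h_def by (simp only: Tp_add)
      also have "\<dots> \<le> Tp M (\<lambda>y. (e - c) * gG y + c) z" by (rule Tp_mono[OF z hb])
      also have "\<dots> = (e - c) * Tp M gG z + c" by (rule Tp_affine[OF z])
      also have "\<dots> = e * Tp M gG z + c * (1 - Tp M gG z)" by (simp add: algebra_simps)
      also have "\<dots> \<le> e * 1 + c * (1 - \<delta>)"
        using w w1 e c0 unfolding gG_def by (intro add_mono mult_left_mono) auto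
      also have "\<dots> = e * (\<Sum>j<Suc k. (1 - \<delta>) ^ j) + (1 - \<delta>) ^ Suc k"
      proof -
        have S: "(\<Sum>j<Suc k. (1 - \<delta>) ^ j) = 1 + (1 - \<delta>) * (\<Sum>j<k. (1 - \<delta>) ^ j)"
          by (simp only: sum.lessThan_Suc_shift sum_distrib_left power_Suc power_0)
        show ?thesis unfolding c_def S power_Suc by algebra
      qed
      finally show "Tp (s + Suc k * M) ?B z \<le> e * (\<Sum>j<Suc k. (1 - \<delta>) ^ j) + (1 - \<delta>) ^ Suc k" .
    qed
  qed
  obtain k0 where k0: "(1 - \<delta>) ^ k0 < ep / 2" using real_arch_pow_inv[of "ep/2" "1 - \<delta>"] ep d by auto
  have gs: "(\<Sum>j<k0. (1 - \<delta>) ^ j) \<le> 1 / \<delta>"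
  proof -
    have "(\<Sum>j<k0. (1 - \<delta>) ^ j) = (1 - (1 - \<delta>) ^ k0) / \<delta>"
      using sum_gp_strict[of "1 - \<delta>" k0] d by simp
    also have "\<dots> \<le> 1 / \<delta>" using d by (intro divide_right_mono) auto
    finally show ?thesis .
  qed
  have "\<forall>t\<ge>1 + k0 * M. \<forall>z\<in>Z. Tp t ?B z \<le> ep"
  proof (intro allI impI ballI)
    fix t :: nat and z assume t: "1 + k0 * M \<le> t" and z: "z \<in> Z"
    have "Tp t ?B z = Tp ((t - k0 * M) + k0 * M) ?B z" using t by simp
    also have "\<dots> \<le> e * (\<Sum>j<k0. (1 - \<delta>) ^ j) + (1 - \<delta>) ^ k0"
    proof -
      have "1 \<le> t - k0 * M" using t by simp
      thus ?thesis using main[of k0] z by blast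
    qed
    also have "\<dots> \<le> e * (1 / \<delta>) + ep / 2" using gs e k0 by (intro add_mono mult_left_mono) auto
    also have "\<dots> \<le> ep" using e d by (simp add: field_simps)
    finally show "Tp t ?B z \<le> ep" .
  qed
  thus ?thesis by blast
qed


lemma dist_ps: assumes y: "y \<in> Z" and f: "fst y = actvec \<alpha>"
  shows "dist y (ps \<alpha>) \<le> 2 * dd \<alpha> y"
proof -
  have "dist y (ps \<alpha>) = dist (snd y) (actvec \<alpha>)"
    using f unfolding ps_def by (cases y) (simp add: dist_Pair_Pair)
  also have "\<dots> = norm (snd y - actvec \<alpha>)" by (simp add: dist_norm)
  also have "\<dots> \<le> (\<Sum>i\<in>UNIV. norm ((snd y - actvec \<alpha>) $ i))"
    unfolding norm_vec_def by (rule L2_set_le_sum) auto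
  also have "\<dots> \<le> (\<Sum>i\<in>UNIV. 2 * (1 - snd y $ i $ \<alpha> i))"
  proof (rule sum_mono)
    fix i
    let ?x = "snd y $ i"
    have "norm ((snd y - actvec \<alpha>) $ i) \<le> (\<Sum>k\<in>UNIV. \<bar>(snd y - actvec \<alpha>) $ i $ k\<bar>)"
      by (rule norm_le_l1_cart)
    also have "\<dots> = (\<Sum>k\<in>UNIV. \<bar>?x $ k - (if k = \<alpha> i then 1 else 0)\<bar>)"
      by (simp add: actvec_nth)
    also have "\<dots> = \<bar>?x $ \<alpha> i - 1\<bar> + (\<Sum>k\<in>UNIV - {\<alpha> i}. ?x $ k)"
      using ZD(1)[OF y] by (simp add: sum.remove[of UNIV "\<alpha> i"])
    also have "(\<Sum>k\<in>UNIV - {\<alpha> i}. ?x $ k) = 1 - ?x $ \<alpha> i"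
      using ZD(3)[OF y, of i] by (simp add: sum_diff1)
    also have "\<bar>?x $ \<alpha> i - 1\<bar> = 1 - ?x $ \<alpha> i" using Z_le1[OF y] by simp
    finally show "norm ((snd y - actvec \<alpha>) $ i) \<le> 2 * (1 - snd y $ i $ \<alpha> i)" by simp
  qed
  also have "\<dots> = 2 * dd \<alpha> y" unfolding dd_def by (simp add: sum_distrib_left)
  finally show ?thesis .
qed

lemma finite_min_choice:
  fixes P :: "'k \<Rightarrow> real \<Rightarrow> bool"
  assumes "finite S" "\<And>x. x \<in> S \<Longrightarrow> \<exists>d>0. P x d"
    and mono: "\<And>x d d'. P x d \<Longrightarrow> 0 < d' \<Longrightarrow> d' \<le> d \<Longrightarrow> P x d'"
  shows "\<exists>d>0. \<forall>x\<in>S. P x d"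
  using assms(1,2)
proof (induction S rule: finite_induct)
  case empty show ?case by (auto intro: exI[of _ 1])
next
  case (insert a S)
  obtain d1 where d1: "d1 > 0" "\<forall>x\<in>S. P x d1" using insert by auto
  obtain d2 where d2: "d2 > 0" "P a d2" using insert by auto
  show ?case using d1 d2 by (intro exI[of _ "min d1 d2"]) (auto intro: mono)
qed

lemma G_mono: "\<eta> \<le> \<eta>' \<Longrightarrow> G \<alpha> \<eta> \<subseteq> G \<alpha> \<eta>'"
  unfolding G_def by auto

lemma cont_near:
  fixes f :: "('i,'a) state \<Rightarrow> real"
  assumes f: "continuous_on Z f" and e: "0 < e"
  shows "\<exists>\<eta>0>0. \<forall>\<alpha>\<in>Prof. \<forall>y\<in>G \<alpha> \<eta>0. \<bar>f y - f (ps \<alpha>)\<bar> \<le> e"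
proof (rule finite_min_choice[where P="\<lambda>\<alpha> \<eta>0. \<forall>y\<in>G \<alpha> \<eta>0. \<bar>f y - f (ps \<alpha>)\<bar> \<le> e"])
  show "finite Prof" by simp
  fix \<alpha> assume a: "\<alpha> \<in> Prof"
  obtain d where d: "d > 0" "\<forall>y\<in>Z. dist y (ps \<alpha>) < d \<longrightarrow> dist (f y) (f (ps \<alpha>)) < e"
    using f ps_Z[OF a] e unfolding continuous_on_iff by meson
  show "\<exists>\<eta>0>0. \<forall>y\<in>G \<alpha> \<eta>0. \<bar>f y - f (ps \<alpha>)\<bar> \<le> e"
  proof (intro exI[of _ "d / 3"] conjI ballI)
    show "0 < d / 3" using d by simp
    fix y assume "y \<in> G \<alpha> (d / 3)"
    hence y: "y \<in> Z" "fst y = actvec \<alpha>" "dd \<alpha> y \<le> d / 3" unfolding G_def by auto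
    have "dist y (ps \<alpha>) < d" using dist_ps[OF y(1,2)] y(3) d by linarith
    thus "\<bar>f y - f (ps \<alpha>)\<bar> \<le> e" using d y by (auto simp: dist_real_def)
  qed
next
  fix \<alpha> d d' assume "\<forall>y\<in>G \<alpha> d. \<bar>f y - f (ps \<alpha>)\<bar> \<le> e" "0 < d'" "d' \<le> d"
  thus "\<forall>y\<in>G \<alpha> d'. \<bar>f y - f (ps \<alpha>)\<bar> \<le> e" using G_mono[of d' d \<alpha>] by auto
qed

lemma keyK:
  assumes g: "\<And>y. y \<in> Z \<Longrightarrow> 0 \<le> g y \<and> g y \<le> K"
    and ge: "\<And>\<alpha> y. \<alpha> \<in> Prof \<Longrightarrow> y \<in> G \<alpha> \<eta>0 \<Longrightarrow> g y \<le> e0" and e0: "0 \<le> e0" and z: "z \<in> Z"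
  shows "Tp t g z \<le> e0 + K * Tp t (indicator (Bad \<eta>0)) z"
proof -
  have "Tp t g z \<le> Tp t (\<lambda>y. K * indicator (Bad \<eta>0) y + e0) z"
  proof (rule Tp_mono[OF z])
    fix y assume y: "y \<in> Z"
    show "g y \<le> K * indicator (Bad \<eta>0) y + e0"
    proof (cases "y \<in> Bad \<eta>0")
      case True thus ?thesis using g[OF y] e0 by simp
    next
      case False
      then obtain \<alpha> where "\<alpha> \<in> Prof" "y \<in> G \<alpha> \<eta>0" using y unfolding Bad_def by auto
      thus ?thesis using ge False by simp
    qed
  qed
  also have "\<dots> = K * Tp t (indicator (Bad \<eta>0)) z + e0" by (rule Tp_affine[OF z])
  finally show ?thesis by simp
qed

lemma vanish:
  assumes F: "continuous_on Z F" and Fb: "\<And>y. y \<in> Z \<Longrightarrow> \<bar>F y\<bar> \<le> K"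
    and F0: "\<And>\<alpha>. \<alpha> \<in> Prof \<Longrightarrow> F (ps \<alpha>) = 0" and ep: "0 < ep"
  shows "\<exists>T0. \<forall>t\<ge>T0. \<forall>z\<in>Z. \<bar>Tp t F z\<bar> \<le> ep"
proof -
  have K: "0 \<le> K" using Fb[OF ps_Z[OF someI_ex[OF ex_in_conv[THEN iffD2, OF Prof_ne]]]] by linarith
  obtain \<eta>0 where eta: "\<eta>0 > 0" "\<And>\<alpha> y. \<alpha> \<in> Prof \<Longrightarrow> y \<in> G \<alpha> \<eta>0 \<Longrightarrow> \<bar>F y - F (ps \<alpha>)\<bar> \<le> ep / 2"
    using cont_near[OF F, of "ep/2"] ep by auto
  obtain T0 where T0: "\<And>t z. t \<ge> T0 \<Longrightarrow> z \<in> Z \<Longrightarrow> Tp t (indicator (Bad \<eta>0)) z \<le> ep / (2 * (K + 1))"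
    using absorb[OF eta(1), of "ep / (2 * (K + 1))"] ep K by auto
  have "\<bar>Tp t F z\<bar> \<le> ep" if t: "t \<ge> T0" and z: "z \<in> Z" for t z
  proof -
    have "\<bar>Tp t F z\<bar> \<le> Tp t (\<lambda>y. \<bar>F y\<bar>) z" by (rule Tp_abs[OF z])
    also have "\<dots> \<le> ep / 2 + K * Tp t (indicator (Bad \<eta>0)) z"
      by (rule keyK[OF _ _ _ z]) (use Fb eta F0 ep in auto)
    also have "\<dots> \<le> ep / 2 + K * (ep / (2 * (K + 1)))"
      using T0[OF t z] K by (intro add_mono mult_left_mono) auto
    also have "\<dots> \<le> ep"
    proof -
      have "K * (ep / (2 * (K + 1))) \<le> ep / 2" using K ep by (simp add: field_simps)
      thus ?thesis by linarith
    qed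
    finally show ?thesis .
  qed
  thus ?thesis by blast
qed

lemma cauchyT:
  assumes f: "continuous_on Z f" and fb: "\<And>y. y \<in> Z \<Longrightarrow> \<bar>f y\<bar> \<le> Mf" and ep: "0 < ep"
  shows "\<exists>T0. \<forall>t\<ge>T0. \<forall>s. \<forall>z\<in>Z. \<bar>Tp (t + s) f z - Tp t f z\<bar> \<le> ep"
proof -
  have Mf: "0 \<le> Mf" using fb[OF ps_Z[OF someI_ex[OF ex_in_conv[THEN iffD2, OF Prof_ne]]]] by linarith
  define e where "e = ep / 4"
  have e: "0 < e" unfolding e_def using ep by simp
  obtain \<eta>0 where eta: "\<eta>0 > 0" "\<And>\<alpha> y. \<alpha> \<in> Prof \<Longrightarrow> y \<in> G \<alpha> \<eta>0 \<Longrightarrow> \<bar>f y - f (ps \<alpha>)\<bar> \<le> e"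
    using cont_near[OF f e] by auto
  define \<eta>1 where "\<eta>1 = min \<eta>0 (e * (1 - r) / (2 * Mf + 1))"
  have eta1: "0 < \<eta>1" "\<eta>1 \<le> \<eta>0" "\<eta>1 \<le> e * (1 - r) / (2 * Mf + 1)"
    unfolding \<eta>1_def using eta e r_bounds Mf by auto
  have near1: "\<bar>f y - f (ps \<alpha>)\<bar> \<le> e" if "\<alpha> \<in> Prof" "y \<in> G \<alpha> \<eta>1" for \<alpha> y
  proof -
    have "y \<in> G \<alpha> \<eta>0" using G_mono[OF eta1(2)] that(2) by blast
    thus ?thesis using eta(2)[OF that(1)] by blast
  qed
  have gs: "\<bar>Tp s f y - f y\<bar> \<le> 3 * e" if a: "\<alpha> \<in> Prof" and y: "y \<in> G \<alpha> \<eta>1" for s \<alpha> y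
  proof -
    have yZ: "y \<in> Z" using y unfolding G_def by auto
    have dy: "dd \<alpha> y \<le> \<eta>1" using y unfolding G_def by auto
    have "Tp s f y - f (ps \<alpha>) = Tp s (\<lambda>w. 1 * f w + (- f (ps \<alpha>))) y" using Tp_affine[OF yZ, of s 1 f "- f (ps \<alpha>)"] by simp
    hence "\<bar>Tp s f y - f (ps \<alpha>)\<bar> \<le> Tp s (\<lambda>w. \<bar>1 * f w + (- f (ps \<alpha>))\<bar>) y"
      using Tp_abs[OF yZ] by metis
    also have "\<dots> \<le> Tp s (\<lambda>w. 2 * Mf * indicator (Z - G \<alpha> \<eta>1) w + e) y"
    proof (rule Tp_mono[OF yZ])
      fix w assume w: "w \<in> Z"
      show "\<bar>1 * f w + - f (ps \<alpha>)\<bar> \<le> 2 * Mf * indicator (Z - G \<alpha> \<eta>1) w + e"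
      proof (cases "w \<in> G \<alpha> \<eta>1")
        case True thus ?thesis using near1[OF a True] by simp
      next
        case False
        have "\<bar>1 * f w + - f (ps \<alpha>)\<bar> \<le> 2 * Mf" using fb[OF w] fb[OF ps_Z[OF a]] by linarith
        thus ?thesis using False w e by simp
      qed
    qed
    also have "\<dots> = 2 * Mf * Tp s (indicator (Z - G \<alpha> \<eta>1)) y + e" by (rule Tp_affine[OF yZ])
    also have "\<dots> \<le> 2 * Mf * (dd \<alpha> y / (1 - r)) + e"
      using stab0[OF a y] Mf by (intro add_mono mult_left_mono) auto
    also have "\<dots> \<le> 2 * Mf * (\<eta>1 / (1 - r)) + e"
      using dy r_bounds Mf by (intro add_mono mult_left_mono divide_right_mono) auto
    also have "\<dots> \<le> 2 * e"
    proof -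
      have "\<eta>1 / (1 - r) \<le> e / (2 * Mf + 1)" using eta1(3) r_bounds Mf by (simp add: field_simps)
      hence "2 * Mf * (\<eta>1 / (1 - r)) \<le> 2 * Mf * (e / (2 * Mf + 1))" using Mf by (intro mult_left_mono) auto
      also have "\<dots> \<le> e" using Mf e by (simp add: field_simps)
      finally show ?thesis by simp
    qed
    finally have "\<bar>Tp s f y - f (ps \<alpha>)\<bar> \<le> 2 * e" .
    thus ?thesis using near1[OF a y] by linarith
  qed
  obtain T0 where T0: "\<And>t z. t \<ge> T0 \<Longrightarrow> z \<in> Z \<Longrightarrow> Tp t (indicator (Bad \<eta>1)) z \<le> e / (2 * Mf + 1)"
    using absorb[OF eta1(1), of "e / (2 * Mf + 1)"] e Mf by auto
  have "\<bar>Tp (t + s) f z - Tp t f z\<bar> \<le> ep" if t: "t \<ge> T0" and z: "z \<in> Z" for t s z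
  proof -
    have bnd: "\<And>y. y \<in> Z \<Longrightarrow> \<bar>Tp s f y\<bar> \<le> Mf"
    proof -
      fix y assume y: "y \<in> Z"
      have fb': "\<And>y. y \<in> Z \<Longrightarrow> - Mf \<le> f y \<and> f y \<le> Mf"
      proof -
        fix y assume "y \<in> Z" thus "- Mf \<le> f y \<and> f y \<le> Mf" using fb[of y] by linarith
      qed
      show "\<bar>Tp s f y\<bar> \<le> Mf" using Tp_bounds[where g=f and lo="-Mf" and hi=Mf and t=s, OF y fb'] by (simp add: abs_le_iff)
    qed
    have "Tp (t + s) f z - Tp t f z = Tp t (\<lambda>y. Tp s f y - f y) z"
      using Tp_diff[of t "Tp s f" f z] Tp_add[of t s f] by simp
    hence "\<bar>Tp (t + s) f z - Tp t f z\<bar> \<le> Tp t (\<lambda>y. \<bar>Tp s f y - f y\<bar>) z"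
      using Tp_abs[OF z, of t "\<lambda>y. Tp s f y - f y"] by simp
    also have "\<dots> \<le> 3 * e + 2 * Mf * Tp t (indicator (Bad \<eta>1)) z"
    proof (rule keyK[OF _ _ _ z])
      fix y assume y: "y \<in> Z"
      show "0 \<le> \<bar>Tp s f y - f y\<bar> \<and> \<bar>Tp s f y - f y\<bar> \<le> 2 * Mf" using bnd[OF y] fb[OF y] by linarith
    qed (use gs e in auto)
    also have "\<dots> \<le> 3 * e + 2 * Mf * (e / (2 * Mf + 1))"
      using T0[OF t z] Mf by (intro add_mono mult_left_mono) auto
    also have "\<dots> \<le> 4 * e" using Mf e by (simp add: field_simps)
    finally show ?thesis unfolding e_def by simp
  qed
  thus ?thesis by blast
qed


lemma pw_cont: "continuous_on S (\<lambda>y. pw y \<alpha>)"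
  unfolding pw_def by (intro continuous_intros)

lemma pw_bnd: "y \<in> Z \<Longrightarrow> \<bar>pw y \<alpha>\<bar> \<le> 1"
  using pw_nonneg pw_le1 by (simp add: abs_le_iff)

definition pi :: "('i \<Rightarrow> 'a) \<Rightarrow> ('i,'a) state \<Rightarrow> real" where
  "pi \<alpha> z = lim (\<lambda>t. Tp t (\<lambda>y. pw y \<alpha>) z)"

lemma pi_conv: assumes z: "z \<in> Z" shows "(\<lambda>t. Tp t (\<lambda>y. pw y \<alpha>) z) \<longlonglongrightarrow> pi \<alpha> z"
proof -
  have "Cauchy (\<lambda>t. Tp t (\<lambda>y. pw y \<alpha>) z)"
  proof (rule CauchyI)
    fix e :: real assume e: "0 < e"
    obtain T0 where T0: "\<And>t s z. t \<ge> T0 \<Longrightarrow> z \<in> Z \<Longrightarrow>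
        \<bar>Tp (t + s) (\<lambda>y. pw y \<alpha>) z - Tp t (\<lambda>y. pw y \<alpha>) z\<bar> \<le> e / 2"
    proof -
      have "\<exists>T0. \<forall>t\<ge>T0. \<forall>s. \<forall>z\<in>Z. \<bar>Tp (t + s) (\<lambda>y. pw y \<alpha>) z - Tp t (\<lambda>y. pw y \<alpha>) z\<bar> \<le> e / 2"
        by (rule cauchyT[OF pw_cont]) (use pw_bnd e in auto)
      thus ?thesis using that by blast
    qed
    have "norm (Tp m (\<lambda>y. pw y \<alpha>) z - Tp n (\<lambda>y. pw y \<alpha>) z) < e" if "m \<ge> T0" "n \<ge> T0" for m n
    proof (cases "m \<le> n")
      case True
      have "\<bar>Tp (m + (n - m)) (\<lambda>y. pw y \<alpha>) z - Tp m (\<lambda>y. pw y \<alpha>) z\<bar> \<le> e / 2"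
        using T0[OF that(1) z] .
      moreover have "\<bar>Tp m (\<lambda>y. pw y \<alpha>) z - Tp n (\<lambda>y. pw y \<alpha>) z\<bar> = \<bar>Tp n (\<lambda>y. pw y \<alpha>) z - Tp m (\<lambda>y. pw y \<alpha>) z\<bar>"
        by (rule abs_minus_commute)
      ultimately show ?thesis using True e by simp
    next
      case False
      have "\<bar>Tp (n + (m - n)) (\<lambda>y. pw y \<alpha>) z - Tp n (\<lambda>y. pw y \<alpha>) z\<bar> \<le> e / 2"
        using T0[OF that(2) z] .
      thus ?thesis using False e by simp
    qed
    thus "\<exists>M. \<forall>m\<ge>M. \<forall>n\<ge>M. norm (Tp m (\<lambda>y. pw y \<alpha>) z - Tp n (\<lambda>y. pw y \<alpha>) z) < e" by blast
  qed
  thus ?thesis unfolding pi_def Cauchy_convergent_iff convergent_LIMSEQ_iff .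
qed

lemma pi_unif: assumes ep: "0 < ep"
  shows "eventually (\<lambda>t. \<forall>z\<in>Z. \<bar>Tp t (\<lambda>y. pw y \<alpha>) z - pi \<alpha> z\<bar> \<le> ep) sequentially"
proof -
  obtain T0 where T0: "\<And>t s z. t \<ge> T0 \<Longrightarrow> z \<in> Z \<Longrightarrow>
      \<bar>Tp (t + s) (\<lambda>y. pw y \<alpha>) z - Tp t (\<lambda>y. pw y \<alpha>) z\<bar> \<le> ep"
  proof -
    have "\<exists>T0. \<forall>t\<ge>T0. \<forall>s. \<forall>z\<in>Z. \<bar>Tp (t + s) (\<lambda>y. pw y \<alpha>) z - Tp t (\<lambda>y. pw y \<alpha>) z\<bar> \<le> ep"
      by (rule cauchyT[OF pw_cont]) (use pw_bnd ep in auto)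
    thus ?thesis using that by blast
  qed
  have "\<bar>Tp t (\<lambda>y. pw y \<alpha>) z - pi \<alpha> z\<bar> \<le> ep" if t: "t \<ge> T0" and z: "z \<in> Z" for t z
  proof -
    have "(\<lambda>s. \<bar>Tp (s + t) (\<lambda>y. pw y \<alpha>) z - Tp t (\<lambda>y. pw y \<alpha>) z\<bar>) \<longlonglongrightarrow>
        \<bar>pi \<alpha> z - Tp t (\<lambda>y. pw y \<alpha>) z\<bar>"
      by (intro tendsto_intros LIMSEQ_ignore_initial_segment pi_conv[OF z])
    moreover have "\<forall>s\<ge>0. \<bar>Tp (s + t) (\<lambda>y. pw y \<alpha>) z - Tp t (\<lambda>y. pw y \<alpha>) z\<bar> \<le> ep"
      using T0[OF t z] by (simp add: add.commute)
    ultimately have "\<bar>pi \<alpha> z - Tp t (\<lambda>y. pw y \<alpha>) z\<bar> \<le> ep" by (intro LIMSEQ_le_const2) blast+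
    thus ?thesis by simp
  qed
  thus ?thesis unfolding eventually_sequentially by blast
qed

lemma Tp_sum: "finite S \<Longrightarrow> Tp t (\<lambda>y. \<Sum>\<alpha>\<in>S. g \<alpha> y) z = (\<Sum>\<alpha>\<in>S. Tp t (g \<alpha>) z)"
proof (induction S rule: finite_induct)
  case empty
  have "Tp t (\<lambda>y. 0 * g undefined y) z = 0 * Tp t (g undefined) z" by (rule Tp_scale)
  thus ?case by simp
next
  case (insert a S)
  have "Tp t (\<lambda>y. 1 * g a y + 1 * (\<Sum>\<alpha>\<in>S. g \<alpha> y)) z = 1 * Tp t (g a) z + 1 * Tp t (\<lambda>y. \<Sum>\<alpha>\<in>S. g \<alpha> y) z"
    by (rule fun_cong[OF Tp_lin])
  thus ?case using insert by simp
qed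

lemma pi_nonneg: "z \<in> Z \<Longrightarrow> 0 \<le> pi \<alpha> z"
  by (rule LIMSEQ_le_const[OF pi_conv]) (auto intro!: Tp_lower pw_nonneg)

lemma pi_sum: assumes z: "z \<in> Z" shows "(\<Sum>\<alpha>\<in>Prof. pi \<alpha> z) = 1"
proof -
  have "(\<lambda>t. \<Sum>\<alpha>\<in>Prof. Tp t (\<lambda>y. pw y \<alpha>) z) \<longlonglongrightarrow> (\<Sum>\<alpha>\<in>Prof. pi \<alpha> z)"
    by (intro tendsto_sum pi_conv[OF z])
  moreover have "(\<Sum>\<alpha>\<in>Prof. Tp t (\<lambda>y. pw y \<alpha>) z) = 1" for t
  proof -
    have "(\<Sum>\<alpha>\<in>Prof. Tp t (\<lambda>y. pw y \<alpha>) z) = Tp t (\<lambda>y. \<Sum>\<alpha>\<in>Prof. pw y \<alpha>) z"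
      by (rule Tp_sum[symmetric]) simp
    also have "\<dots> = Tp t (\<lambda>_. 1) z" by (rule Tp_cong[OF z]) (simp add: pw_sum)
    also have "\<dots> = 1" by (rule Tp_const[OF z])
    finally show ?thesis .
  qed
  ultimately have "(\<lambda>t. 1::real) \<longlonglongrightarrow> (\<Sum>\<alpha>\<in>Prof. pi \<alpha> z)" by simp
  from LIMSEQ_unique[OF this tendsto_const] show ?thesis .
qed

lemma pi_ps: assumes b: "\<beta> \<in> Prof" shows "pi \<alpha> (ps \<beta>) = (if \<alpha> = \<beta> then 1 else 0)"
proof -
  have "pi \<alpha> (ps \<beta>) = lim (\<lambda>t. pw (ps \<beta>) \<alpha>)" unfolding pi_def by (simp add: Tp_ps[OF b])
  also have "\<dots> = pw (ps \<beta>) \<alpha>" by (rule limI) simp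
  finally show ?thesis by (simp add: pw_ps)
qed

definition Lf :: "(('i,'a) state \<Rightarrow> real) \<Rightarrow> ('i,'a) state \<Rightarrow> real" where
  "Lf f z = (\<Sum>\<alpha>\<in>Prof. f (ps \<alpha>) * pi \<alpha> z)"

lemma conv_main:
  assumes f: "continuous_on Z f" and fb: "\<And>y. y \<in> Z \<Longrightarrow> \<bar>f y\<bar> \<le> Mf" and ep: "0 < ep"
  shows "eventually (\<lambda>t. \<forall>z\<in>Z. \<bar>Tp t f z - Lf f z\<bar> \<le> ep) sequentially"
proof -
  have Mf: "0 \<le> Mf" using fb[OF ps_Z[OF someI_ex[OF ex_in_conv[THEN iffD2, OF Prof_ne]]]] by linarith
  define S where "S = (\<lambda>y. \<Sum>\<alpha>\<in>Prof. f (ps \<alpha>) * pw y \<alpha>)"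
  define F where "F = (\<lambda>y. f y - S y)"
  define C where "C = real (card Prof)"
  have C: "0 \<le> C" unfolding C_def by simp
  have Sb: "\<bar>S y\<bar> \<le> C * Mf" if y: "y \<in> Z" for y
  proof -
    have "\<bar>S y\<bar> \<le> (\<Sum>\<alpha>\<in>Prof. \<bar>f (ps \<alpha>) * pw y \<alpha>\<bar>)" unfolding S_def by (rule sum_abs)
    also have "\<dots> \<le> (\<Sum>\<alpha>\<in>Prof. Mf)"
    proof (rule sum_mono)
      fix \<alpha> assume a: "\<alpha> \<in> Prof"
      have "\<bar>f (ps \<alpha>) * pw y \<alpha>\<bar> = \<bar>f (ps \<alpha>)\<bar> * \<bar>pw y \<alpha>\<bar>" by (simp add: abs_mult)
      also have "\<dots> \<le> Mf * 1" using fb[OF ps_Z[OF a]] pw_bnd[OF y] by (intro mult_mono) auto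
      finally show "\<bar>f (ps \<alpha>) * pw y \<alpha>\<bar> \<le> Mf" by simp
    qed
    finally show ?thesis unfolding C_def by simp
  qed
  have Fc: "continuous_on Z F" unfolding F_def S_def by (intro continuous_intros f pw_cont)
  have Fb: "\<bar>F y\<bar> \<le> Mf + C * Mf" if "y \<in> Z" for y
    using fb[OF that] Sb[OF that] unfolding F_def by linarith
  have F0: "F (ps \<beta>) = 0" if b: "\<beta> \<in> Prof" for \<beta>
  proof -
    have "S (ps \<beta>) = (\<Sum>\<alpha>\<in>Prof. (if \<alpha> = \<beta> then f (ps \<beta>) else 0))"
      unfolding S_def by (intro sum.cong) (auto simp: pw_ps)
    also have "\<dots> = f (ps \<beta>)" using b by simp
    finally show ?thesis unfolding F_def by simp
  qed
  define ep' where "ep' = ep / (2 * (C * Mf + 1))"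
  have "0 < 2 * (C * Mf + 1)" using C Mf by (simp add: add_nonneg_pos)
  hence ep': "0 < ep'" unfolding ep'_def using ep by simp
  obtain T1 where T1: "\<And>t z. t \<ge> T1 \<Longrightarrow> z \<in> Z \<Longrightarrow> \<bar>Tp t F z\<bar> \<le> ep / 2"
    using vanish[OF Fc Fb F0, of "ep/2"] ep by auto
  have ev: "eventually (\<lambda>t. \<forall>\<alpha>\<in>Prof. \<forall>z\<in>Z. \<bar>Tp t (\<lambda>y. pw y \<alpha>) z - pi \<alpha> z\<bar> \<le> ep') sequentially"
    by (rule eventually_ball_finite) (auto intro: pi_unif[OF ep'])
  then obtain T2 where T2: "\<And>t \<alpha> z. t \<ge> T2 \<Longrightarrow> \<alpha> \<in> Prof \<Longrightarrow> z \<in> Z \<Longrightarrow>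
      \<bar>Tp t (\<lambda>y. pw y \<alpha>) z - pi \<alpha> z\<bar> \<le> ep'" unfolding eventually_sequentially by blast
  have main: "\<bar>Tp t f z - Lf f z\<bar> \<le> ep" if t: "t \<ge> max T1 T2" and z: "z \<in> Z" for t z
  proof -
    have fe: "f = (\<lambda>y. 1 * F y + 1 * S y)" unfolding F_def by auto
    have "Tp t f z = Tp t F z + Tp t S z"
      by (subst fe) (use fun_cong[OF Tp_lin[of t 1 F 1 S], of z] in simp)
    also have "Tp t S z = (\<Sum>\<alpha>\<in>Prof. f (ps \<alpha>) * Tp t (\<lambda>y. pw y \<alpha>) z)"
      unfolding S_def by (simp add: Tp_sum Tp_scale)
    finally have "Tp t f z - Lf f z = Tp t F z + (\<Sum>\<alpha>\<in>Prof. f (ps \<alpha>) * (Tp t (\<lambda>y. pw y \<alpha>) z - pi \<alpha> z))"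
      unfolding Lf_def by (simp add: algebra_simps sum_subtractf)
    hence "\<bar>Tp t f z - Lf f z\<bar> \<le> \<bar>Tp t F z\<bar> + \<bar>\<Sum>\<alpha>\<in>Prof. f (ps \<alpha>) * (Tp t (\<lambda>y. pw y \<alpha>) z - pi \<alpha> z)\<bar>"
      by (simp only: abs_triangle_ineq)
    also have "\<dots> \<le> \<bar>Tp t F z\<bar> + (\<Sum>\<alpha>\<in>Prof. \<bar>f (ps \<alpha>) * (Tp t (\<lambda>y. pw y \<alpha>) z - pi \<alpha> z)\<bar>)"
      by (intro add_left_mono sum_abs)
    also have "\<dots> \<le> ep / 2 + (\<Sum>\<alpha>\<in>Prof. Mf * ep')"
    proof (rule add_mono)
      show "\<bar>Tp t F z\<bar> \<le> ep / 2" using T1[OF _ z] t by simp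
      show "(\<Sum>\<alpha>\<in>Prof. \<bar>f (ps \<alpha>) * (Tp t (\<lambda>y. pw y \<alpha>) z - pi \<alpha> z)\<bar>) \<le> (\<Sum>\<alpha>\<in>Prof. Mf * ep')"
      proof (rule sum_mono)
        fix \<alpha> assume a: "\<alpha> \<in> Prof"
        show "\<bar>f (ps \<alpha>) * (Tp t (\<lambda>y. pw y \<alpha>) z - pi \<alpha> z)\<bar> \<le> Mf * ep'"
          unfolding abs_mult using fb[OF ps_Z[OF a]] T2[OF _ a z] t by (intro mult_mono) auto
      qed
    qed
    also have "\<dots> = ep / 2 + C * Mf * ep'" unfolding C_def by simp
    also have "\<dots> \<le> ep"
    proof -
      have eq: "C * Mf * ep' = (ep / 2) * (C * Mf / (C * Mf + 1))" unfolding ep'_def by (simp add: field_simps)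
      have "0 < C * Mf + 1" using C Mf by (simp add: add_nonneg_pos)
      hence "C * Mf / (C * Mf + 1) \<le> 1" by (simp add: divide_le_eq_1)
      hence "(ep / 2) * (C * Mf / (C * Mf + 1)) \<le> (ep / 2) * 1" using ep by (intro mult_left_mono) auto
      hence "C * Mf * ep' \<le> ep / 2" unfolding eq by simp
      thus ?thesis by linarith
    qed
    finally show ?thesis .
  qed
  show ?thesis unfolding eventually_sequentially
  proof (rule exI[of _ "max T1 T2"], intro allI impI ballI)
    fix t z assume "max T1 T2 \<le> t" "z \<in> Z"
    thus "\<bar>Tp t f z - Lf f z\<bar> \<le> ep" by (rule main)
  qed
qed


lemma space_Zm[simp]: "space (Zm A) = Z"
  unfolding Zm_def by (simp add: space_restrict_space)

lemma nx_cont: "continuous_on UNIV (\<lambda>z. nx z \<beta>)"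
  unfolding next_state_def by (intro continuous_intros)

lemma nx_meas[measurable]: "\<beta> \<in> Prof \<Longrightarrow> (\<lambda>z. nx z \<beta>) \<in> Zm A \<rightarrow>\<^sub>M Zm A"
  unfolding Zm_def
  by (rule measurable_restrict_space3[OF borel_measurable_continuous_onI[OF nx_cont]]) (auto intro: nx_Z)

lemma pw_meas[measurable]: "(\<lambda>z. pw z \<beta>) \<in> borel_measurable (Zm A)"
  unfolding Zm_def by (rule borel_measurable_continuous_on_restrict[OF pw_cont])

lemma T_meas: assumes g: "g \<in> borel_measurable (Zm A)" shows "T g \<in> borel_measurable (Zm A)"
proof -
  have "(\<lambda>z. \<Sum>\<beta>\<in>Prof. pw z \<beta> * g (nx z \<beta>)) \<in> borel_measurable (Zm A)"
  proof (rule borel_measurable_sum)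
    fix \<beta> assume b: "\<beta> \<in> Prof"
    have "(\<lambda>z. g (nx z \<beta>)) \<in> borel_measurable (Zm A)"
      using measurable_compose[OF nx_meas[OF b] g] .
    thus "(\<lambda>z. pw z \<beta> * g (nx z \<beta>)) \<in> borel_measurable (Zm A)" by (intro borel_measurable_times pw_meas)
  qed
  thus ?thesis unfolding T_def[abs_def] .
qed

lemma Tp_meas: "g \<in> borel_measurable (Zm A) \<Longrightarrow> Tp t g \<in> borel_measurable (Zm A)"
  by (induction t) (auto intro: T_meas)

definition gz :: "('i,'a) state \<Rightarrow> ('i \<Rightarrow> 'a) \<Rightarrow> ('i,'a) state" where
  "gz z \<beta> = (if \<beta> \<in> Prof then nx z \<beta> else z)"

lemma pmf_prof: assumes z: "z \<in> Z" shows "pmf (prof_pmf (snd z)) \<beta> = pw z \<beta>"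
proof -
  have "(\<integral>\<^sup>+\<alpha>. ennreal (\<Prod>i\<in>UNIV. snd z $ i $ \<alpha> i) \<partial>count_space UNIV) = 1"
  proof -
    have "(\<integral>\<^sup>+\<alpha>. ennreal (\<Prod>i\<in>UNIV. snd z $ i $ \<alpha> i) \<partial>count_space UNIV)
        = (\<Sum>\<alpha>\<in>UNIV. ennreal (pw z \<alpha>))"
      by (simp add: nn_integral_count_space_finite pw_def)
    also have "\<dots> = ennreal (\<Sum>\<alpha>\<in>UNIV. pw z \<alpha>)" using pw_nonneg[OF z] by simp
    also have "\<dots> = 1" using pw_sum_UNIV[OF z] by simp
    finally show ?thesis .
  qed
  moreover have "\<forall>\<alpha>. 0 \<le> (\<Prod>i\<in>UNIV. snd z $ i $ \<alpha> i)" using pw_nonneg[OF z] unfolding pw_def by blast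
  ultimately show ?thesis unfolding prof_pmf_def pw_def by (subst pmf_embed_pmf) auto
qed

lemma set_prof: assumes z: "z \<in> Z" shows "set_pmf (prof_pmf (snd z)) \<subseteq> Prof"
  using pw_out[OF z] by (auto simp: set_pmf_eq pmf_prof[OF z])

lemma gz_meas: "z \<in> Z \<Longrightarrow> gz z \<in> measure_pmf M \<rightarrow>\<^sub>M Zm A"
  by (auto simp: gz_def intro: nx_Z)

lemma Pker_eq: assumes z: "z \<in> Z"
  shows "Pker A u \<epsilon> z = distr (measure_pmf (prof_pmf (snd z))) (Zm A) (gz z)"
proof -
  let ?M = "measure_pmf (prof_pmf (snd z))"
  have "(\<lambda>B. emeasure ?M (nx z -` B \<inter> space ?M)) = (\<lambda>B. emeasure ?M (gz z -` B \<inter> space ?M))"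
  proof
    fix B
    show "emeasure ?M (nx z -` B \<inter> space ?M) = emeasure ?M (gz z -` B \<inter> space ?M)"
      by (rule emeasure_eq_AE) (use set_prof[OF z] in \<open>auto simp: AE_measure_pmf_iff gz_def\<close>)
  qed
  thus ?thesis unfolding Pker_def distr_def by simp
qed

lemma Pker_prob: assumes z: "z \<in> Z" shows "prob_space (Pker A u \<epsilon> z)" "sets (Pker A u \<epsilon> z) = sets (Zm A)"
  unfolding Pker_eq[OF z] using gz_meas[OF z]
  by (auto intro!: measure_pmf.prob_space_distr)

lemma Pker_nn: assumes z: "z \<in> Z" and h: "h \<in> borel_measurable (Zm A)"
  shows "(\<integral>\<^sup>+y. h y \<partial>Pker A u \<epsilon> z) = (\<Sum>\<beta>\<in>Prof. h (nx z \<beta>) * ennreal (pw z \<beta>))"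
proof -
  have "(\<integral>\<^sup>+y. h y \<partial>Pker A u \<epsilon> z) = (\<integral>\<^sup>+\<beta>. h (gz z \<beta>) \<partial>measure_pmf (prof_pmf (snd z)))"
    unfolding Pker_eq[OF z] by (rule nn_integral_distr[OF gz_meas[OF z]]) (use h in simp)
  also have "\<dots> = (\<Sum>\<beta>\<in>Prof. h (gz z \<beta>) * pmf (prof_pmf (snd z)) \<beta>)"
    by (rule nn_integral_measure_pmf_support) (use set_prof[OF z] in auto)
  also have "\<dots> = (\<Sum>\<beta>\<in>Prof. h (nx z \<beta>) * ennreal (pw z \<beta>))"
    by (intro sum.cong) (auto simp: gz_def pmf_prof[OF z])
  finally show ?thesis .
qed

lemma Pker_int: assumes z: "z \<in> Z" and f: "f \<in> borel_measurable (Zm A)"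
  shows "(\<integral>y. f y \<partial>Pker A u \<epsilon> z) = T f z"
proof -
  have "(\<integral>y. f y \<partial>Pker A u \<epsilon> z) = (\<integral>\<beta>. f (gz z \<beta>) \<partial>measure_pmf (prof_pmf (snd z)))"
    unfolding Pker_eq[OF z] by (rule integral_distr[OF gz_meas[OF z] f])
  also have "\<dots> = (\<Sum>\<beta>\<in>Prof. pmf (prof_pmf (snd z)) \<beta> *\<^sub>R f (gz z \<beta>))"
    by (rule integral_measure_pmf) (use set_prof[OF z] in auto)
  also have "\<dots> = T f z"
    unfolding T_def by (intro sum.cong) (auto simp: gz_def pmf_prof[OF z])
  finally show ?thesis .
qed

lemma Pker_emeasure: assumes z: "z \<in> Z" and B: "B \<in> sets (Zm A)"
  shows "emeasure (Pker A u \<epsilon> z) B = (\<Sum>\<beta>\<in>Prof. indicator B (nx z \<beta>) * ennreal (pw z \<beta>))"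
proof -
  have "emeasure (Pker A u \<epsilon> z) B = (\<integral>\<^sup>+y. indicator B y \<partial>Pker A u \<epsilon> z)"
    using B Pker_prob(2)[OF z] by simp
  also have "\<dots> = (\<Sum>\<beta>\<in>Prof. indicator B (nx z \<beta>) * ennreal (pw z \<beta>))"
    by (rule Pker_nn[OF z]) (use B in simp)
  finally show ?thesis .
qed

lemma Pker_meas: "Pker A u \<epsilon> \<in> Zm A \<rightarrow>\<^sub>M prob_algebra (Zm A)"
proof (rule measurable_prob_algebraI)
  show "\<And>x. x \<in> space (Zm A) \<Longrightarrow> prob_space (Pker A u \<epsilon> x)" using Pker_prob by simp
  show "Pker A u \<epsilon> \<in> Zm A \<rightarrow>\<^sub>M subprob_algebra (Zm A)"
  proof (rule measurable_subprob_algebra)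
    show "\<And>a. a \<in> space (Zm A) \<Longrightarrow> subprob_space (Pker A u \<epsilon> a)"
      using Pker_prob by (simp add: prob_space_imp_subprob_space)
    show "\<And>a. a \<in> space (Zm A) \<Longrightarrow> sets (Pker A u \<epsilon> a) = sets (Zm A)" using Pker_prob by simp
    fix B assume B: "B \<in> sets (Zm A)"
    have "(\<lambda>z. \<Sum>\<beta>\<in>Prof. indicator B (nx z \<beta>) * ennreal (pw z \<beta>)) \<in> borel_measurable (Zm A)"
    proof (rule borel_measurable_sum)
      fix \<beta> assume b: "\<beta> \<in> Prof"
      have "(\<lambda>z. indicator B (nx z \<beta>) :: ennreal) \<in> borel_measurable (Zm A)"
        using measurable_compose[OF nx_meas[OF b] borel_measurable_indicator[OF B]] .
      thus "(\<lambda>z. indicator B (nx z \<beta>) * ennreal (pw z \<beta>)) \<in> borel_measurable (Zm A)"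
        by (intro borel_measurable_times_ennreal) auto
    qed
    thus "(\<lambda>z. emeasure (Pker A u \<epsilon> z) B) \<in> borel_measurable (Zm A)"
      by (rule measurable_cong[THEN iffD1, rotated]) (simp add: Pker_emeasure[OF _ B])
  qed
qed

lemma Pstep_meas: "Pstep A u \<epsilon> t \<in> Zm A \<rightarrow>\<^sub>M prob_algebra (Zm A)"
proof (induction t)
  case 0
  show ?case using measurable_return_prob_space[of "Zm A"] by (simp add: Pstep.simps(1)[abs_def])
next
  case (Suc t)
  have "(\<lambda>z. bind (Pstep A u \<epsilon> t z) (Pker A u \<epsilon>)) \<in> Zm A \<rightarrow>\<^sub>M prob_algebra (Zm A)"
    by (rule measurable_bind_prob_space[OF Suc Pker_meas])
  thus ?case by (simp add: Pstep.simps(2)[abs_def])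
qed

lemma integral_bind_real:
  fixes f :: "_ \<Rightarrow> real"
  assumes K: "K \<in> N \<rightarrow>\<^sub>M subprob_algebra N" and M: "sets M = sets N" "prob_space M"
    and f: "f \<in> borel_measurable N" and fb: "\<And>x. x \<in> space N \<Longrightarrow> \<bar>f x\<bar> \<le> B"
  shows "(\<integral>y. f y \<partial>(M \<bind> K)) = (\<integral>x. (\<integral>y. f y \<partial>K x) \<partial>M)"
proof -
  have K': "K \<in> M \<rightarrow>\<^sub>M subprob_algebra N" using K unfolding measurable_cong_sets[OF M(1) refl] .
  have ne: "space M \<noteq> {}" by (rule prob_space.not_empty[OF M(2)])
  have "M \<bind> K = join (distr M (subprob_algebra N) K)" by (rule bind_nonempty''[OF K' ne])
  moreover have "integral\<^sup>L (join (distr M (subprob_algebra N) K)) f = (\<integral>M'. integral\<^sup>L M' f \<partial>distr M (subprob_algebra N) K)"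
  proof (rule integral_join[OF f fb])
    show "sets (distr M (subprob_algebra N) K) = sets (subprob_algebra N)" by simp
    show "finite_measure (distr M (subprob_algebra N) K)"
      using prob_space.prob_space_distr[OF M(2) K'] prob_space.finite_measure by blast
    show "AE M' in distr M (subprob_algebra N) K. emeasure M' (space M') \<le> ennreal 1"
      by (intro AE_I2) (auto simp: space_subprob_algebra dest: subprob_space.emeasure_space_le_1)
  qed
  moreover have "(\<integral>M'. integral\<^sup>L M' f \<partial>distr M (subprob_algebra N) K) = (\<integral>x. integral\<^sup>L (K x) f \<partial>M)"
    by (rule integral_distr[OF K']) (rule integral_measurable_subprob_algebra[OF f])
  ultimately show ?thesis by simp
qed

lemma Pstep_prob: "z \<in> Z \<Longrightarrow> prob_space (Pstep A u \<epsilon> t z) \<and> sets (Pstep A u \<epsilon> t z) = sets (Zm A)"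
  using measurable_space[OF Pstep_meas, of z t] by (simp add: space_prob_algebra)

lemma Pstep_int:
  assumes z: "z \<in> Z"
  shows "f \<in> borel_measurable (Zm A) \<Longrightarrow> (\<And>y. y \<in> Z \<Longrightarrow> \<bar>f y\<bar> \<le> B) \<Longrightarrow>
    (\<integral>y. f y \<partial>Pstep A u \<epsilon> t z) = Tp t f z"
proof (induction t arbitrary: f)
  case 0
  thus ?case using z by (simp add: integral_return)
next
  case (Suc t)
  have fb': "\<And>y. y \<in> Z \<Longrightarrow> \<bar>T f y\<bar> \<le> B"
  proof -
    fix y assume y: "y \<in> Z"
    have b2: "\<And>x. x \<in> Z \<Longrightarrow> - B \<le> f x \<and> f x \<le> B"
    proof -
      fix x assume "x \<in> Z" thus "- B \<le> f x \<and> f x \<le> B" using Suc(3)[of x] by linarith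
    qed
    have "- B \<le> Tp 1 f y" "Tp 1 f y \<le> B" using Tp_bounds[where g=f and lo="-B" and hi=B and t=1, OF y b2] by auto
    thus "\<bar>T f y\<bar> \<le> B" by simp
  qed
  have "(\<integral>y. f y \<partial>Pstep A u \<epsilon> (Suc t) z) = (\<integral>x. (\<integral>y. f y \<partial>Pker A u \<epsilon> x) \<partial>Pstep A u \<epsilon> t z)"
    unfolding Pstep.simps(2)
    by (rule integral_bind_real[OF measurable_prob_algebraD[OF Pker_meas] _ _ Suc(2), where B=B])
       (use Pstep_prob[OF z, of t] Suc(3) in auto)
  also have "\<dots> = (\<integral>x. T f x \<partial>Pstep A u \<epsilon> t z)"
    by (rule Bochner_Integration.integral_cong[OF refl])
       (use Pker_int Suc(2) Pstep_prob[OF z, of t] sets_eq_imp_space_eq in \<open>metis space_Zm\<close>)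
  also have "\<dots> = Tp t (T f) z" by (rule Suc.IH[OF T_meas[OF Suc(2)] fb'])
  also have "\<dots> = Tp (Suc t) f z" by (simp add: funpow_Suc_right del: funpow.simps)
  finally show ?case .
qed

lemma pi_meas: "(\<lambda>z. pi \<alpha> z) \<in> borel_measurable (Zm A)"
  by (rule borel_measurable_LIMSEQ_metric[where f="\<lambda>t. Tp t (\<lambda>y. pw y \<alpha>)"])
     (auto intro: Tp_meas pi_conv)

definition "a0 = (SOME \<alpha>. \<alpha> \<in> Prof)"
lemma a0: "a0 \<in> Prof"
proof -
  obtain x where "x \<in> Prof" using Prof_ne by blast
  thus ?thesis unfolding a0_def by (rule someI[of "\<lambda>\<alpha>. \<alpha> \<in> Prof"])
qed

definition "sfun \<beta> = (if \<beta> \<in> Prof then ps \<beta> else ps a0)"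
definition "Qz z = embed_pmf (\<lambda>\<beta>. if \<beta> \<in> Prof then pi \<beta> z else 0)"
definition "Pik z = distr (measure_pmf (Qz z)) (Zm A) sfun"

lemma sfun_meas: "sfun \<in> measure_pmf M \<rightarrow>\<^sub>M Zm A"
  by (auto simp: sfun_def ps_Z a0)

lemma pmf_Qz: assumes z: "z \<in> Z" shows "pmf (Qz z) \<beta> = (if \<beta> \<in> Prof then pi \<beta> z else 0)"
proof -
  have "(\<integral>\<^sup>+\<beta>. ennreal (if \<beta> \<in> Prof then pi \<beta> z else 0) \<partial>count_space UNIV) = 1"
  proof -
    have "(\<integral>\<^sup>+\<beta>. ennreal (if \<beta> \<in> Prof then pi \<beta> z else 0) \<partial>count_space UNIV)
      = (\<Sum>\<beta>\<in>UNIV. ennreal (if \<beta> \<in> Prof then pi \<beta> z else 0))"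
      by (simp add: nn_integral_count_space_finite)
    also have "\<dots> = ennreal (\<Sum>\<beta>\<in>UNIV. (if \<beta> \<in> Prof then pi \<beta> z else 0))"
      using pi_nonneg[OF z] by (intro sum_ennreal) auto
    also have "(\<Sum>\<beta>\<in>UNIV. (if \<beta> \<in> Prof then pi \<beta> z else 0)) = (\<Sum>\<beta>\<in>Prof. pi \<beta> z)"
      by (simp add: sum.If_cases)
    finally show ?thesis using pi_sum[OF z] by simp
  qed
  moreover have "\<forall>\<beta>. 0 \<le> (if \<beta> \<in> Prof then pi \<beta> z else 0)" using pi_nonneg[OF z] by auto
  ultimately show ?thesis unfolding Qz_def by (subst pmf_embed_pmf) auto
qed

lemma set_Qz: "z \<in> Z \<Longrightarrow> set_pmf (Qz z) \<subseteq> Prof"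
  by (auto simp: set_pmf_eq pmf_Qz split: if_splits)

lemma Pik_prob: "prob_space (Pik z)" "sets (Pik z) = sets (Zm A)"
  unfolding Pik_def using sfun_meas by (auto intro!: measure_pmf.prob_space_distr)

lemma Pik_nn: assumes z: "z \<in> Z" and h: "h \<in> borel_measurable (Zm A)"
  shows "(\<integral>\<^sup>+y. h y \<partial>Pik z) = (\<Sum>\<beta>\<in>Prof. h (ps \<beta>) * ennreal (pi \<beta> z))"
proof -
  have "(\<integral>\<^sup>+y. h y \<partial>Pik z) = (\<integral>\<^sup>+\<beta>. h (sfun \<beta>) \<partial>measure_pmf (Qz z))"
    unfolding Pik_def by (rule nn_integral_distr[OF sfun_meas]) (use h in simp)
  also have "\<dots> = (\<Sum>\<beta>\<in>Prof. h (sfun \<beta>) * pmf (Qz z) \<beta>)"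
    by (rule nn_integral_measure_pmf_support) (use set_Qz[OF z] in auto)
  also have "\<dots> = (\<Sum>\<beta>\<in>Prof. h (ps \<beta>) * ennreal (pi \<beta> z))"
    by (intro sum.cong) (auto simp: sfun_def pmf_Qz[OF z])
  finally show ?thesis .
qed

lemma Pik_int: assumes z: "z \<in> Z" and f: "f \<in> borel_measurable (Zm A)"
  shows "(\<integral>y. f y \<partial>Pik z) = Lf f z"
proof -
  have "(\<integral>y. f y \<partial>Pik z) = (\<integral>\<beta>. f (sfun \<beta>) \<partial>measure_pmf (Qz z))"
    unfolding Pik_def by (rule integral_distr[OF sfun_meas f])
  also have "\<dots> = (\<Sum>\<beta>\<in>Prof. pmf (Qz z) \<beta> *\<^sub>R f (sfun \<beta>))"
    by (rule integral_measure_pmf) (use set_Qz[OF z] in auto)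
  also have "\<dots> = Lf f z"
    unfolding Lf_def by (intro sum.cong) (auto simp: sfun_def pmf_Qz[OF z])
  finally show ?thesis .
qed

lemma Pik_emeasure: assumes z: "z \<in> Z" and B: "B \<in> sets (Zm A)"
  shows "emeasure (Pik z) B = (\<Sum>\<beta>\<in>Prof. indicator B (ps \<beta>) * ennreal (pi \<beta> z))"
proof -
  have "emeasure (Pik z) B = (\<integral>\<^sup>+y. indicator B y \<partial>Pik z)"
    using B Pik_prob(2) by simp
  also have "\<dots> = (\<Sum>\<beta>\<in>Prof. indicator B (ps \<beta>) * ennreal (pi \<beta> z))"
    by (rule Pik_nn[OF z]) (use B in simp)
  finally show ?thesis .
qed

lemma Pik_meas: "Pik \<in> Zm A \<rightarrow>\<^sub>M prob_algebra (Zm A)"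
proof (rule measurable_prob_algebraI)
  show "\<And>x. x \<in> space (Zm A) \<Longrightarrow> prob_space (Pik x)" using Pik_prob by simp
  show "Pik \<in> Zm A \<rightarrow>\<^sub>M subprob_algebra (Zm A)"
  proof (rule measurable_subprob_algebra)
    show "\<And>a. a \<in> space (Zm A) \<Longrightarrow> subprob_space (Pik a)"
      using Pik_prob by (simp add: prob_space_imp_subprob_space)
    show "\<And>a. a \<in> space (Zm A) \<Longrightarrow> sets (Pik a) = sets (Zm A)" using Pik_prob by simp
    fix B assume B: "B \<in> sets (Zm A)"
    have "(\<lambda>z. \<Sum>\<beta>\<in>Prof. indicator B (ps \<beta>) * ennreal (pi \<beta> z)) \<in> borel_measurable (Zm A)"
      by (intro borel_measurable_sum borel_measurable_times_ennreal measurable_compose[OF pi_meas]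
          measurable_ennreal) auto
    thus "(\<lambda>z. emeasure (Pik z) B) \<in> borel_measurable (Zm A)"
      by (rule measurable_cong[THEN iffD1, rotated]) (simp add: Pik_emeasure[OF _ B])
  qed
qed

lemma Pik_ps: assumes g: "\<gamma> \<in> Prof" and B: "B \<in> sets (Zm A)"
  shows "emeasure (Pik (ps \<gamma>)) B = indicator B (ps \<gamma>)"
proof -
  have "emeasure (Pik (ps \<gamma>)) B = (\<Sum>\<beta>\<in>Prof. (if \<beta> = \<gamma> then indicator B (ps \<beta>) else 0))"
    unfolding Pik_emeasure[OF ps_Z[OF g] B] by (intro sum.cong) (auto simp: pi_ps[OF g])
  also have "\<dots> = indicator B (ps \<gamma>)" using g by simp
  finally show ?thesis .
qed

lemma Pker_ps: assumes g: "\<gamma> \<in> Prof" and B: "B \<in> sets (Zm A)"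
  shows "emeasure (Pker A u \<epsilon> (ps \<gamma>)) B = indicator B (ps \<gamma>)"
proof -
  have "emeasure (Pker A u \<epsilon> (ps \<gamma>)) B = (\<Sum>\<beta>\<in>Prof. (if \<beta> = \<gamma> then indicator B (ps \<beta>) else 0))"
    unfolding Pker_emeasure[OF ps_Z[OF g] B] by (intro sum.cong) (auto simp: pw_ps nx_ps)
  also have "\<dots> = indicator B (ps \<gamma>)" using g by simp
  finally show ?thesis .
qed

lemma inv_Pik: assumes z: "z \<in> Z" shows "invariant_prob (Zm A) (Pker A u \<epsilon>) (Pik z)"
  unfolding invariant_prob_def
proof (intro conjI ballI)
  show "Pik z \<in> space (prob_algebra (Zm A))" using Pik_prob by (simp add: space_prob_algebra)
  fix B assume B: "B \<in> sets (Zm A)"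
  have "(\<integral>\<^sup>+y. emeasure (Pker A u \<epsilon> y) B \<partial>Pik z)
      = (\<Sum>\<beta>\<in>Prof. emeasure (Pker A u \<epsilon> (ps \<beta>)) B * ennreal (pi \<beta> z))"
    by (rule Pik_nn[OF z]) (rule measurable_emeasure_kernel[OF measurable_prob_algebraD[OF Pker_meas] B])
  also have "\<dots> = emeasure (Pik z) B"
    unfolding Pik_emeasure[OF z B] by (intro sum.cong) (auto simp: Pker_ps[OF _ B])
  finally show "emeasure (Pik z) B = (\<integral>\<^sup>+y. emeasure (Pker A u \<epsilon> y) B \<partial>Pik z)" by simp
qed

end

context game begin

lemma Zm_setsI: "S \<in> sets borel \<Longrightarrow> Z \<inter> S \<in> sets (Zm A)"
  unfolding Zm_def by (auto simp: sets_restrict_space)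

lemma G_eq: "G \<alpha> \<eta> = Z \<inter> {y. fst y = actvec \<alpha> \<and> dd \<alpha> y \<le> \<eta>}"
  unfolding G_def by auto

lemma closed_Gset: "closed {y::('i,'a) state. fst y = actvec \<alpha> \<and> dd \<alpha> y \<le> \<eta>}"
  unfolding dd_def by (intro closed_Collect_conj closed_Collect_eq closed_Collect_le continuous_intros)

lemma Bad_eq: "Bad \<eta> = Z \<inter> - (\<Union>\<alpha>\<in>Prof. {y. fst y = actvec \<alpha> \<and> dd \<alpha> y \<le> \<eta>})"
  unfolding Bad_def G_eq by auto

lemma Bad_sets: "Bad \<eta> \<in> sets (Zm A)"
  unfolding Bad_eq by (intro Zm_setsI borel_open open_Compl closed_UN) (auto intro: closed_Gset)

lemma dd0: assumes y: "y \<in> Z" and d: "dd \<alpha> y \<le> 0" shows "snd y = actvec \<alpha>"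
proof -
  have nn: "\<And>i. 0 \<le> 1 - snd y $ i $ \<alpha> i" using Z_le1[OF y] by simp
  have "dd \<alpha> y = 0" using d dd_nonneg[OF y, of \<alpha>] by simp
  hence one: "\<And>i. snd y $ i $ \<alpha> i = 1" unfolding dd_def using nn by (simp add: sum_nonneg_eq_0_iff)
  have "snd y $ i $ k = (if k = \<alpha> i then 1 else 0)" for i k
  proof (cases "k = \<alpha> i")
    case True thus ?thesis using one by simp
  next
    case False
    have "(\<Sum>k\<in>UNIV - {\<alpha> i}. snd y $ i $ k) = 0"
      using ZD(3)[OF y, of i] one[of i] by (simp add: sum_diff1)
    hence "\<forall>k\<in>UNIV - {\<alpha> i}. snd y $ i $ k = 0"
      using ZD(1)[OF y] by (subst sum_nonneg_eq_0_iff[symmetric]) auto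
    thus ?thesis using False by auto
  qed
  thus ?thesis by (simp add: vec_eq_iff actvec_nth)
qed

lemma notS_Bad: assumes y: "y \<in> Z" and nS: "y \<notin> ps ` Prof" shows "\<exists>k::nat. y \<in> Bad (1 / Suc k)"
proof -
  have "\<exists>\<eta>>0. \<forall>\<alpha>\<in>Prof. y \<notin> G \<alpha> \<eta>"
  proof (rule finite_min_choice[where P="\<lambda>\<alpha> \<eta>. y \<notin> G \<alpha> \<eta>"])
    show "finite Prof" by simp
    fix \<alpha> assume a: "\<alpha> \<in> Prof"
    show "\<exists>\<eta>>0. y \<notin> G \<alpha> \<eta>"
    proof (cases "fst y = actvec \<alpha>")
      case False thus ?thesis unfolding G_def by (intro exI[of _ 1]) auto
    next
      case True
      have "\<not> dd \<alpha> y \<le> 0"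
      proof
        assume "dd \<alpha> y \<le> 0"
        hence "snd y = actvec \<alpha>" by (rule dd0[OF y])
        hence "y = ps \<alpha>" using True unfolding ps_def by (metis prod.collapse)
        thus False using nS a by auto
      qed
      thus ?thesis unfolding G_def by (intro exI[of _ "dd \<alpha> y / 2"]) auto
    qed
  next
    fix \<alpha> d d' assume "y \<notin> G \<alpha> d" "0 < d'" "d' \<le> d"
    thus "y \<notin> G \<alpha> d'" using G_mono[of d' d \<alpha>] by auto
  qed
  then obtain \<eta> where eta: "\<eta> > 0" "\<And>\<alpha>. \<alpha> \<in> Prof \<Longrightarrow> y \<notin> G \<alpha> \<eta>" by auto
  obtain n :: nat where n: "n > 0" "inverse (real n) < \<eta>" using ex_inverse_of_nat_less[OF eta(1)] by auto
  then obtain k where k: "n = Suc k" using gr0_implies_Suc by blast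
  have "1 / real (Suc k) \<le> \<eta>" using n k by (simp add: inverse_eq_divide)
  hence "y \<in> Bad (1 / Suc k)" using y eta(2) G_mono[of "1 / Suc k" \<eta>] unfolding Bad_def by auto
  thus ?thesis by blast
qed

lemma pure_eq: "pure_states A = ps ` Prof"
proof
  show "pure_states A \<subseteq> ps ` Prof"
  proof
    fix z assume "z \<in> pure_states A"
    hence z: "z \<in> Z" "snd z = fst z" unfolding pure_states_def by auto
    obtain \<alpha> where a: "\<alpha> \<in> Prof" "fst z = actvec \<alpha>" using ZD(4)[OF z(1)] by auto
    have "z = ps \<alpha>" using z(2) a(2) unfolding ps_def by (metis prod.collapse)
    thus "z \<in> ps ` Prof" using a by auto
  qed
  show "ps ` Prof \<subseteq> pure_states A"
    unfolding pure_states_def using ps_Z by (auto simp: ps_def)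
qed

context
  fixes \<mu> :: "('i,'a) state measure"
  assumes mu_inv: "invariant_prob (Zm A) (Pker A u \<epsilon>) \<mu>"
begin

lemma mu_facts: "sets \<mu> = sets (Zm A)" "prob_space \<mu>" "space \<mu> = Z"
proof -
  have "\<mu> \<in> space (prob_algebra (Zm A))" using mu_inv unfolding invariant_prob_def by blast
  thus s: "sets \<mu> = sets (Zm A)" "prob_space \<mu>" by (auto simp: space_prob_algebra)
  show "space \<mu> = Z" using sets_eq_imp_space_eq[OF s(1)] by simp
qed

lemma Pker_mu: "Pker A u \<epsilon> \<in> \<mu> \<rightarrow>\<^sub>M subprob_algebra (Zm A)"
  using measurable_prob_algebraD[OF Pker_meas] unfolding measurable_cong_sets[OF mu_facts(1) refl] .

lemma mu_ne: "space \<mu> \<noteq> {}" by (rule prob_space.not_empty[OF mu_facts(2)])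

lemma mu_bind: "\<mu> \<bind> Pker A u \<epsilon> = \<mu>"
proof (rule measure_eqI)
  have ks: "\<And>x. x \<in> space \<mu> \<Longrightarrow> sets (Pker A u \<epsilon> x) = sets (Zm A)"
    using Pker_prob(2) mu_facts(3) by auto
  show s: "sets (\<mu> \<bind> Pker A u \<epsilon>) = sets \<mu>"
    using sets_bind[OF ks mu_ne] mu_facts(1) by simp
  fix B assume "B \<in> sets (\<mu> \<bind> Pker A u \<epsilon>)"
  hence B: "B \<in> sets (Zm A)" using s mu_facts(1) by simp
  have "emeasure (\<mu> \<bind> Pker A u \<epsilon>) B = (\<integral>\<^sup>+x. emeasure (Pker A u \<epsilon> x) B \<partial>\<mu>)"
    by (rule emeasure_bind[OF mu_ne Pker_mu B])
  also have "\<dots> = emeasure \<mu> B" using mu_inv B unfolding invariant_prob_def by simp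
  finally show "emeasure (\<mu> \<bind> Pker A u \<epsilon>) B = emeasure \<mu> B" .
qed

lemma inv_T: assumes g: "g \<in> borel_measurable (Zm A)" and g0: "\<And>y. y \<in> Z \<Longrightarrow> 0 \<le> g y"
  shows "(\<integral>\<^sup>+y. ennreal (g y) \<partial>\<mu>) = (\<integral>\<^sup>+y. ennreal (T g y) \<partial>\<mu>)"
proof -
  have "(\<integral>\<^sup>+y. ennreal (g y) \<partial>\<mu>) = (\<integral>\<^sup>+y. ennreal (g y) \<partial>(\<mu> \<bind> Pker A u \<epsilon>))"
    by (simp only: mu_bind)
  also have "\<dots> = (\<integral>\<^sup>+x. \<integral>\<^sup>+y. ennreal (g y) \<partial>Pker A u \<epsilon> x \<partial>\<mu>)"
    by (rule nn_integral_bind[OF _ Pker_mu]) (use g in simp)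
  also have "\<dots> = (\<integral>\<^sup>+x. ennreal (T g x) \<partial>\<mu>)"
  proof (rule nn_integral_cong)
    fix x assume "x \<in> space \<mu>"
    hence x: "x \<in> Z" using mu_facts(3) by simp
    have "(\<integral>\<^sup>+y. ennreal (g y) \<partial>Pker A u \<epsilon> x) = (\<Sum>\<beta>\<in>Prof. ennreal (g (nx x \<beta>)) * ennreal (pw x \<beta>))"
      by (rule Pker_nn[OF x]) (use g in simp)
    also have "\<dots> = (\<Sum>\<beta>\<in>Prof. ennreal (pw x \<beta> * g (nx x \<beta>)))"
      using g0 nx_Z[OF x] pw_nonneg[OF x] by (intro sum.cong refl) (simp add: ennreal_mult' mult.commute)
    also have "\<dots> = ennreal (T g x)"
      unfolding T_def using g0 nx_Z[OF x] pw_nonneg[OF x] by (intro sum_ennreal) auto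
    finally show "(\<integral>\<^sup>+y. ennreal (g y) \<partial>Pker A u \<epsilon> x) = ennreal (T g x)" .
  qed
  finally show ?thesis .
qed

lemma inv_Tp: assumes g: "g \<in> borel_measurable (Zm A)" and g0: "\<And>y. y \<in> Z \<Longrightarrow> 0 \<le> g y"
  shows "(\<integral>\<^sup>+y. ennreal (g y) \<partial>\<mu>) = (\<integral>\<^sup>+y. ennreal (Tp t g y) \<partial>\<mu>)"
proof (induction t)
  case (Suc t)
  have "(\<integral>\<^sup>+y. ennreal (Tp t g y) \<partial>\<mu>) = (\<integral>\<^sup>+y. ennreal (T (Tp t g) y) \<partial>\<mu>)"
    by (rule inv_T[OF Tp_meas[OF g]]) (rule Tp_lower, auto intro: g0)
  thus ?case using Suc by simp
qed simp

lemma mu_Bad: assumes eta: "0 < \<eta>" shows "emeasure \<mu> (Bad \<eta>) = 0"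
proof -
  have Bm: "Bad \<eta> \<in> sets \<mu>" using Bad_sets mu_facts(1) by simp
  have ind: "indicator (Bad \<eta>) \<in> borel_measurable (Zm A)" using Bad_sets by simp
  have E: "emeasure \<mu> (Bad \<eta>) \<le> 0 + ennreal e" if e: "0 < e" for e
  proof -
    obtain T0 where T0: "\<And>t z. t \<ge> T0 \<Longrightarrow> z \<in> Z \<Longrightarrow> Tp t (indicator (Bad \<eta>)) z \<le> e"
      using absorb[OF eta e] by blast
    have "emeasure \<mu> (Bad \<eta>) = (\<integral>\<^sup>+y. ennreal (indicator (Bad \<eta>) y) \<partial>\<mu>)"
      using Bm by (simp add: ennreal_indicator)
    also have "\<dots> = (\<integral>\<^sup>+y. ennreal (Tp T0 (indicator (Bad \<eta>)) y) \<partial>\<mu>)"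
      by (rule inv_Tp[OF ind]) simp
    also have "\<dots> \<le> (\<integral>\<^sup>+y. ennreal e \<partial>\<mu>)"
      by (rule nn_integral_mono) (use T0 mu_facts(3) in \<open>auto intro: ennreal_leI\<close>)
    also have "\<dots> = ennreal e" using prob_space.emeasure_space_1[OF mu_facts(2)] by simp
    finally show ?thesis by simp
  qed
  have "emeasure \<mu> (Bad \<eta>) \<le> 0"
  proof (rule ennreal_le_epsilon)
    fix e :: real assume "0 < e" thus "emeasure \<mu> (Bad \<eta>) \<le> 0 + ennreal e" by (rule E)
  qed
  thus ?thesis by simp
qed

lemma mu_S: "AE z in \<mu>. z \<in> ps ` Prof"
proof -
  have "\<forall>k::nat. AE y in \<mu>. y \<notin> Bad (1 / Suc k)"
  proof
    fix k :: nat
    show "AE y in \<mu>. y \<notin> Bad (1 / Suc k)"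
      by (rule AE_not_in) (use mu_Bad[of "1 / Suc k"] Bad_sets mu_facts(1) in \<open>auto intro: null_setsI\<close>)
  qed
  hence "AE y in \<mu>. \<forall>k::nat. y \<notin> Bad (1 / Suc k)" by (simp add: AE_all_countable)
  moreover have "AE y in \<mu>. y \<in> space \<mu>" by simp
  ultimately show ?thesis
  proof eventually_elim
    case (elim y)
    thus ?case using notS_Bad mu_facts(3) by blast
  qed
qed

lemma inv_mu: "invariant_prob (Zm A) Pik \<mu>"
  unfolding invariant_prob_def
proof (intro conjI ballI)
  show "\<mu> \<in> space (prob_algebra (Zm A))" using mu_inv unfolding invariant_prob_def by blast
  fix B assume B: "B \<in> sets (Zm A)"
  have "(\<integral>\<^sup>+z. emeasure (Pik z) B \<partial>\<mu>) = (\<integral>\<^sup>+z. indicator B z \<partial>\<mu>)"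
  proof (rule nn_integral_cong_AE)
    show "AE z in \<mu>. emeasure (Pik z) B = indicator B z"
      using mu_S by eventually_elim (auto simp: Pik_ps[OF _ B])
  qed
  also have "\<dots> = emeasure \<mu> B" using B mu_facts(1) by simp
  finally show "emeasure \<mu> B = (\<integral>\<^sup>+z. emeasure (Pik z) B \<partial>\<mu>)" by simp
qed

end


lemma part_b:
  assumes fc: "continuous_on Z f" and fbd: "bounded (f ` Z)"
  shows "(\<lambda>t. SUP z\<in>Z. \<bar>kernel_apply (Pstep A u \<epsilon> t) f z - kernel_apply Pik f z\<bar>) \<longlonglongrightarrow> 0"
proof -
  obtain Mf where Mf: "\<And>y. y \<in> Z \<Longrightarrow> \<bar>f y\<bar> \<le> Mf" using fbd unfolding bounded_iff by auto
  have fm: "f \<in> borel_measurable (Zm A)"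
    unfolding Zm_def by (rule borel_measurable_continuous_on_restrict[OF fc])
  have eq: "(SUP z\<in>Z. \<bar>kernel_apply (Pstep A u \<epsilon> t) f z - kernel_apply Pik f z\<bar>)
      = (SUP z\<in>Z. \<bar>Tp t f z - Lf f z\<bar>)" for t
    by (rule SUP_cong[OF refl]) (simp add: kernel_apply_def Pstep_int[OF _ fm Mf] Pik_int[OF _ fm])
  have Zne: "ps a0 \<in> Z" using ps_Z[OF a0] .
  show ?thesis unfolding eq
  proof (rule LIMSEQ_I)
    fix r :: real assume r: "0 < r"
    obtain N where N: "\<And>t z. t \<ge> N \<Longrightarrow> z \<in> Z \<Longrightarrow> \<bar>Tp t f z - Lf f z\<bar> \<le> r / 2"
      using conv_main[OF fc Mf, of "r/2"] r unfolding eventually_sequentially by auto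
    have "norm ((SUP z\<in>Z. \<bar>Tp t f z - Lf f z\<bar>) - 0) < r" if t: "t \<ge> N" for t
    proof -
      have le: "(SUP z\<in>Z. \<bar>Tp t f z - Lf f z\<bar>) \<le> r / 2"
        by (rule cSUP_least) (use Zne N[OF t] in auto)
      have bdd: "bdd_above ((\<lambda>z. \<bar>Tp t f z - Lf f z\<bar>) ` Z)"
        by (rule bdd_aboveI2[where M="r/2"]) (use N[OF t] in auto)
      have ge: "0 \<le> (SUP z\<in>Z. \<bar>Tp t f z - Lf f z\<bar>)"
        by (rule cSUP_upper2[OF bdd Zne]) simp
      show ?thesis using le ge r by simp
    qed
    thus "\<exists>no. \<forall>n\<ge>no. norm ((SUP z\<in>Z. \<bar>Tp n f z - Lf f z\<bar>) - 0) < r" by blast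
  qed
qed

lemma part_d: assumes z: "z \<in> Z" shows "support_on Z (Pik z) \<subseteq> pure_states A"
proof -
  have sub: "ps ` Prof \<subseteq> Z" using ps_Z by auto
  have cl: "closedin (top_of_set Z) (ps ` Prof)"
    by (rule closed_subset[OF sub]) (intro finite_imp_closed finite_imageI finite_Prof)
  have Bs: "Z - ps ` Prof \<in> sets (Zm A)"
  proof -
    have "Z \<inter> - (ps ` Prof) \<in> sets (Zm A)"
      by (intro Zm_setsI borel_open open_Compl finite_imp_closed finite_imageI finite_Prof)
    thus ?thesis by (simp add: Diff_eq)
  qed
  have "emeasure (Pik z) (Z - ps ` Prof) = 0"
    unfolding Pik_emeasure[OF z Bs] by (intro sum.neutral) auto
  hence "ps ` Prof \<in> {C. closedin (top_of_set Z) C \<and> emeasure (Pik z) (Z - C) = 0}" using cl by simp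
  hence "support_on Z (Pik z) \<subseteq> ps ` Prof" unfolding support_on_def by (rule Inter_lower)
  thus ?thesis using pure_eq by simp
qed

end

theorem proposition4p2:
  fixes A :: "'i::finite \<Rightarrow> 'a::finite set"
    and u :: "'i \<Rightarrow> ('i \<Rightarrow> 'a) \<Rightarrow> real"
    and \<epsilon> :: real
    and \<mu> :: "('i,'a) state measure"
  assumes A_ne: "\<And>i. A i \<noteq> {}"
    and u_pos: "\<And>i \<alpha>. (\<forall>j. \<alpha> j \<in> A j) \<Longrightarrow> 0 < u i \<alpha>"
    and eps_pos: "0 < \<epsilon>"
    and eps_small: "\<And>i \<alpha>. (\<forall>j. \<alpha> j \<in> A j) \<Longrightarrow> \<epsilon> * u i \<alpha> < 1"
    and mu_inv: "invariant_prob (Zm A) (Pker A u \<epsilon>) \<mu>"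
  shows "\<exists>Pi_ker. Pi_ker \<in> Zm A \<rightarrow>\<^sub>M prob_algebra (Zm A)
     \<and> (AE z in \<mu>. invariant_prob (Zm A) (Pker A u \<epsilon>) (Pi_ker z))
     \<and> (\<forall>f. continuous_on (Zset A) f \<and> bounded (f ` Zset A) \<longrightarrow>
          (\<lambda>t. SUP z\<in>Zset A. \<bar>kernel_apply (Pstep A u \<epsilon> t) f z - kernel_apply Pi_ker f z\<bar>)
            \<longlonglongrightarrow> 0)
     \<and> invariant_prob (Zm A) Pi_ker \<mu>
     \<and> (\<forall>z\<in>Zset A. support_on (Zset A) (Pi_ker z) \<subseteq> pure_states A)"
proof -
  interpret game A u \<epsilon> using A_ne u_pos eps_pos eps_small by unfold_locales
  show ?thesis
  proof (intro exI[of _ Pik] conjI allI impI ballI)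
    show "Pik \<in> Zm A \<rightarrow>\<^sub>M prob_algebra (Zm A)" by (rule Pik_meas)
    show "AE z in \<mu>. invariant_prob (Zm A) (Pker A u \<epsilon>) (Pik z)"
      using mu_facts(3)[OF mu_inv] inv_Pik by (intro AE_I2) auto
    show "invariant_prob (Zm A) Pik \<mu>" by (rule inv_mu[OF mu_inv])
  next
    fix f :: "('i,'a) state \<Rightarrow> real"
    assume "continuous_on (Zset A) f \<and> bounded (f ` Zset A)"
    thus "(\<lambda>t. SUP z\<in>Zset A. \<bar>kernel_apply (Pstep A u \<epsilon> t) f z - kernel_apply Pik f z\<bar>) \<longlonglongrightarrow> 0"
      using part_b by blast
  next
    fix z assume "z \<in> Zset A"
    thus "support_on (Zset A) (Pik z) \<subseteq> pure_states A" by (rule part_d)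
  qed
qed

end
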